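(* Let $m \geq 0$, $n \geq 1$ be integers and let $c = (c^t; c^b)$ be a sorted deterministically recurrent configuration on $K_{m,n}^0$. Run the following algorithm: let $T$ be the stack $(c^t_1, \ldots, c^t_m, n-1)$ and $B$ the stack $(c^b_1, \ldots, c^b_n)$, each with head its first (smallest) element, and let $w$ be the empty word. While both $T$ and $B$ are non-empty: (a) while $\mathrm{head}(T) > 0$ and $\mathrm{head}(B) > 0$, append $U$ to $w$ and decrease every entry of $T$ and of $B$ by $1$; (b) then, if $0 = \mathrm{head}(T) < \mathrm{head}(B)$, remove the head of $T$, append $H^E$ to $w$, and decrease every entry of $B$ by $1$; else if $0 = \mathrm{head}(B) < \mathrm{head}(T)$, remove the head of $B$, append $H^N$ to $w$, and decrease every entry of $T$ by $1$; else (both heads equal $0$) remove the heads of both $T$ and $B$ and append $D$ to $w$. After the loop, delete the final step (a $D$) of $w$ and output the resulting word $w(c)$. Then $w(c) = \Xi(\Phi(c))$; that is, $c \mapsto w(c)$ is the bijection $\Xi \circ \Phi$ from sorted deterministically recurrent configurations on $K_{m,n}^0$ to $\mathrm{Motz}_{m,n-1}$. Moreover, $\mathrm{level}(c) = \mathrm{Area}(w(c))$.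
   Context: $K_{m,n}^0$ is the complete bipartite graph with "top" vertices $v^t_0, \ldots, v^t_m$ and "bottom" vertices $v^b_1, \ldots, v^b_n$, with an edge between every top and every bottom vertex; $v^t_0$ is the sink. A configuration is a vector $c = (c^t_1, \ldots, c^t_m; c^b_1, \ldots, c^b_n)$ of non-negative integers; it is sorted if $c^t$, $c^b$ are weakly increasing, stable if $c^t_i < n$ and $c^b_j < m+1$ for all $i,j$. Abelian sandpile model (ASM): an unstable non-sink vertex topples by sending one grain to each neighbour (bottom vertices also to the sink); grains sent to the sink disappear. In the Markov chain on stable configurations which adds a grain to a uniformly random non-sink vertex and stabilises by the ASM, a stable configuration is deterministically recurrent if it is a recurrent state. The level is $\mathrm{level}(c) := \sum_i c^t_i + \sum_j c^b_j - mn$. Labelled Motzkin paths: words in steps $U=(1,1)$, $D=(1,-1)$ and horizontal steps $H^N, H^E$ (both $=(1,0)$), starting and ending at height $0$ and never going below the $x$-axis; $\mathrm{Area}(w)$ is the area between the path and the $x$-axis. $\mathrm{Motz}_{m,n-1}$ is the set of such paths with $m+n-1$ steps, exactly $m$ of which are $U$ or $H^E$. A parallelogram polyomino in the box $[0,m+1]\times[0,n]$ is the set of unit cells between two lattice paths $\mathcal{U}$ (upper) and $\mathcal{L}$ (lower) from $(0,0)$ to $(m+1,n)$ with steps $N=(0,1)$, $E=(1,0)$, meeting only at their endpoints; necessarily $\mathcal{U} = (N, u_1, \ldots, u_{m+n-1}, E)$ and $\mathcal{L} = (E, \ell_1, \ldots, \ell_{m+n-1}, N)$. The map $\Xi$ sends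 such a polyomino to $w_1 \cdots w_{m+n-1}$ with $w_i = U$ if $(u_i,\ell_i) = (N,E)$, $w_i = H^N$ if $(u_i,\ell_i)=(N,N)$, $w_i = H^E$ if $(u_i,\ell_i) = (E,E)$, $w_i = D$ if $(u_i,\ell_i) = (E,N)$; it is known to be a bijection onto $\mathrm{Motz}_{m,n-1}$. The Dukes–Le Borgne map $\Phi$: for a sorted stable $c$, $\mathcal{U}(c^t)$ is the path from $(0,0)$ to $(m+1,n)$ whose $E$ steps occur at heights $1+c^t_1, \ldots, 1+c^t_m, n$, and $\mathcal{L}(c^b)$ the path from $(0,0)$ to $(m+1,n)$ whose $N$ steps occur at $x$-coordinates $1+c^b_1, \ldots, 1+c^b_n$; $\Phi(c)$ is the polyomino between them. It is known that $\Phi$ is a bijection from sorted deterministically recurrent configurations on $K_{m,n}^0$ to parallelogram polyominoes in $[0,m+1]\times[0,n]$. *)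

theory Defs
  imports Complex_Main
begin

text \<open>A configuration c = (c^t; c^b) is a pair of lists: fst c = [c^t_1,...,c^t_m]
  (top non-sink vertices), snd c = [c^b_1,...,c^b_n] (bottom vertices).
  The sink v^t_0 carries no grains.\<close>

type_synonym config = "nat list \<times> nat list"

definition wf_config :: "nat \<Rightarrow> nat \<Rightarrow> config \<Rightarrow> bool" where
  "wf_config m n c \<longleftrightarrow> length (fst c) = m \<and> length (snd c) = n"

definition stable :: "nat \<Rightarrow> nat \<Rightarrow> config \<Rightarrow> bool" where
  "stable m n c \<longleftrightarrow> wf_config m n c \<and> (\<forall>i<m. fst c ! i < n) \<and> (\<forall>j<n. snd c ! j < m + 1)"

definition sorted_config :: "config \<Rightarrow> bool" where
  "sorted_config c \<longleftrightarrow> sorted (fst c) \<and> sorted (snd c)"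

text \<open>A top vertex has degree n
  (all bottom vertices); a bottom vertex has degree m+1 (all top vertices incl. the sink);
  grains sent to the sink disappear.\<close>

inductive topple :: "nat \<Rightarrow> nat \<Rightarrow> config \<Rightarrow> config \<Rightarrow> bool" for m n where
  top: "\<lbrakk> i < m; n \<le> ct ! i \<rbrakk> \<Longrightarrow>
        topple m n (ct, cb) (ct[i := ct ! i - n], map Suc cb)"
| bot: "\<lbrakk> j < n; m + 1 \<le> cb ! j \<rbrakk> \<Longrightarrow>
        topple m n (ct, cb) (map Suc ct, cb[j := cb ! j - (m + 1)])"

definition stabilises :: "nat \<Rightarrow> nat \<Rightarrow> config \<Rightarrow> config \<Rightarrow> bool" where
  "stabilises m n c d \<longleftrightarrow> (topple m n)\<^sup>*\<^sup>* c d \<and> stable m n d"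

text \<open>Positive-probability transitions of the Markov chain on stable configurations:
  add a grain to some non-sink vertex and stabilise.\<close>

definition chain_step :: "nat \<Rightarrow> nat \<Rightarrow> config \<Rightarrow> config \<Rightarrow> bool" where
  "chain_step m n c d \<longleftrightarrow> stable m n c \<and>
     ((\<exists>i<m. stabilises m n ((fst c)[i := fst c ! i + 1], snd c) d) \<or>
      (\<exists>j<n. stabilises m n (fst c, (snd c)[j := snd c ! j + 1]) d))"

text \<open>Recurrent state of the (finite) Markov chain: every state reachable from c can reach c back.\<close>

definition det_recurrent :: "nat \<Rightarrow> nat \<Rightarrow> config \<Rightarrow> bool" where
  "det_recurrent m n c \<longleftrightarrow> stable m n c \<and>
     (\<forall>d. (chain_step m n)\<^sup>*\<^sup>* c d \<longrightarrow> (chain_step m n)\<^sup>*\<^sup>* d c)"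

definition sorted_recurrent :: "nat \<Rightarrow> nat \<Rightarrow> config set" where
  "sorted_recurrent m n = {c. sorted_config c \<and> det_recurrent m n c}"

definition level :: "nat \<Rightarrow> nat \<Rightarrow> config \<Rightarrow> int" where
  "level m n c = int (sum_list (fst c) + sum_list (snd c)) - int (m * n)"

datatype mstep = U | D | HN | HE

fun delta :: "mstep \<Rightarrow> int" where
  "delta U = 1" | "delta D = -1" | "delta HN = 0" | "delta HE = 0"

definition height :: "mstep list \<Rightarrow> int" where
  "height w = sum_list (map delta w)"

definition is_motzkin :: "mstep list \<Rightarrow> bool" where
  "is_motzkin w \<longleftrightarrow> height w = 0 \<and> (\<forall>i\<le>length w. height (take i w) \<ge> 0)"

definition Motz :: "nat \<Rightarrow> nat \<Rightarrow> mstep list set" where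
  "Motz m k = {w. is_motzkin w \<and> length w = m + k \<and>
                  length (filter (\<lambda>s. s = U \<or> s = HE) w) = m}"

text \<open>Area between the path and the x-axis: each step contributes the trapezoid
  under it.\<close>

definition Area :: "mstep list \<Rightarrow> real" where
  "Area w = (\<Sum>i<length w. (of_int (height (take i w)) + of_int (height (take (Suc i) w))) / 2)"

definition dec :: "nat list \<Rightarrow> nat list" where
  "dec xs = map (\<lambda>x. x - 1) xs"

function alg :: "nat list \<Rightarrow> nat list \<Rightarrow> mstep list" where
  "alg [] B = []"
| "alg (t # T) [] = []"
| "alg (t # T) (b # B) =
     (if 0 < t \<and> 0 < b then U # alg (dec (t # T)) (dec (b # B))
      else if t = 0 \<and> 0 < b then HE # alg T (dec (b # B))
      else if b = 0 \<and> 0 < t then HN # alg (dec (t # T)) B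
      else D # alg T B)"
  by pat_completeness auto
termination
  by (relation "measures [\<lambda>(T, B). length T + length B, \<lambda>(T, B). hd T]")
     (auto simp: dec_def)

definition wc :: "nat \<Rightarrow> nat \<Rightarrow> config \<Rightarrow> mstep list" where
  "wc m n c = butlast (alg (fst c @ [n - 1]) (snd c))"

datatype lstep = N | E

text \<open>Lattice path from coordinate cur (in the direction of s) whose t-steps occur at the
  given successive s-coordinates, then completed by s-steps up to tot.\<close>

fun path_at :: "lstep \<Rightarrow> lstep \<Rightarrow> nat \<Rightarrow> nat list \<Rightarrow> nat \<Rightarrow> lstep list" where
  "path_at s t cur [] tot = replicate (tot - cur) s"
| "path_at s t cur (h # hs) tot = replicate (h - cur) s @ t # path_at s t h hs tot"

text \<open>A parallelogram polyomino is represented by its pair of boundary paths (upper, lower).\<close>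

definition upper_path :: "nat \<Rightarrow> nat list \<Rightarrow> lstep list" where
  "upper_path n ct = path_at N E 0 (map Suc ct @ [n]) n"

definition lower_path :: "nat \<Rightarrow> nat list \<Rightarrow> lstep list" where
  "lower_path m cb = path_at E N 0 (map Suc cb) (m + 1)"

definition Phi :: "nat \<Rightarrow> nat \<Rightarrow> config \<Rightarrow> lstep list \<times> lstep list" where
  "Phi m n c = (upper_path n (fst c), lower_path m (snd c))"

fun xi_step :: "lstep \<times> lstep \<Rightarrow> mstep" where
  "xi_step (N, E) = U"
| "xi_step (N, N) = HN"
| "xi_step (E, E) = HE"
| "xi_step (E, N) = D"

text \<open>\<Xi>: with upper path (N, u_1..u_{m+n-1}, E) and lower path (E, l_1..l_{m+n-1}, N).\<close>

definition Xi :: "lstep list \<times> lstep list \<Rightarrow> mstep list" where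
  "Xi P = map xi_step (zip (butlast (tl (fst P))) (butlast (tl (snd P))))"

end

theory Submission
  imports Defs
begin


function walk :: "lstep \<Rightarrow> lstep \<Rightarrow> nat list \<Rightarrow> lstep list" where
  "walk a b [] = []"
| "walk a b (t # T) = (if t = 0 then b # walk a b T else a # walk a b (dec (t # T)))"
  by pat_completeness auto
termination
  by (relation "measures [\<lambda>(a, b, T). length T, \<lambda>(a, b, T). hd T]")
     (auto simp: dec_def)

declare walk.simps[simp del]

lemma walk_Nil[simp]: "walk a b [] = []" by (simp add: walk.simps)
lemma walk_0[simp]: "walk a b (0 # T) = b # walk a b T" by (simp add: walk.simps)
lemma walk_pos: "0 < t \<Longrightarrow> walk a b (t # T) = a # walk a b (dec (t # T))"
  by (simp add: walk.simps)

lemma alg_walk: "alg T B = map xi_step (zip (walk N E T) (walk E N B))"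
proof (induction T B rule: alg.induct)
  case (1 B) then show ?case by simp
next
  case (2 t T) then show ?case by (cases "t = 0") (auto simp: walk_pos)
next
  case (3 t T b B)
  then show ?case
    by (cases "t = 0"; cases "b = 0") (auto simp: walk_pos)
qed

lemma sorted_dec: "sorted xs \<Longrightarrow> sorted (dec xs)"
  unfolding dec_def by (induction xs) (auto)

lemma dec_minus: "dec (map (\<lambda>y. y - d) xs) = map (\<lambda>y. y - Suc d) xs"
  unfolding dec_def by auto

lemma walk_shift:
  "d \<le> x \<Longrightarrow> walk a b (map (\<lambda>y. y - d) (x # xs)) = replicate (x - d) a @ b # walk a b (map (\<lambda>y. y - x) xs)"
proof (induction "x - d" arbitrary: d)
  case 0 then have "x = d" by simp
  then show ?case by simp
next
  case (Suc k)
  then have "0 < x - d" by simp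
  then have "walk a b (map (\<lambda>y. y - d) (x # xs)) = a # walk a b (map (\<lambda>y. y - Suc d) (x # xs))"
    using walk_pos[of "x - d" a b "map (\<lambda>y. y - d) xs"] dec_minus[of d "x # xs"] by simp
  also have "\<dots> = a # replicate (x - Suc d) a @ b # walk a b (map (\<lambda>y. y - x) xs)"
    using Suc by simp
  finally show ?case using Suc(2) by (simp add: replicate_app_Cons_same Suc_diff_Suc[symmetric])
qed

lemma walk_shift0: "walk a b (x # xs) = replicate x a @ b # walk a b (map (\<lambda>y. y - x) xs)"
  using walk_shift[of 0 x a b xs] by simp

lemma path_at_walk:
  "sorted xs \<Longrightarrow> \<forall>x\<in>set xs. d \<le> x \<Longrightarrow>
   path_at a b (Suc d) (map Suc xs) tot = walk a b (map (\<lambda>x. x - d) xs) @ replicate (tot - Suc (last (d # xs))) a"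
proof (induction xs arbitrary: d)
  case Nil then show ?case by simp
next
  case (Cons x xs)
  have "path_at a b (Suc d) (map Suc (x # xs)) tot = replicate (x - d) a @ b # path_at a b (Suc x) (map Suc xs) tot"
    by simp
  also have "path_at a b (Suc x) (map Suc xs) tot = walk a b (map (\<lambda>y. y - x) xs) @ replicate (tot - Suc (last (x # xs))) a"
    using Cons by auto
  finally show ?case using walk_shift[of d x a b xs] Cons(3) by simp
qed

lemma path_at0_walk:
  "sorted xs \<Longrightarrow> xs \<noteq> [] \<Longrightarrow>
   path_at a b 0 (map Suc xs) tot = a # (walk a b xs @ replicate (tot - Suc (last xs)) a)"
proof (cases xs)
  case (Cons x xs')
  assume s: "sorted xs"
  have "path_at a b 0 (map Suc xs) tot = replicate (Suc x) a @ b # path_at a b (Suc x) (map Suc xs') tot"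
    using Cons by simp
  also have "path_at a b (Suc x) (map Suc xs') tot = walk a b (map (\<lambda>y. y - x) xs') @ replicate (tot - Suc (last (x # xs'))) a"
    using s Cons by (intro path_at_walk) auto
  finally show ?thesis using walk_shift0[of a b x xs'] Cons by simp
qed simp

lemma count_b_walk: "a \<noteq> b \<Longrightarrow> count_list (walk a b T) b = length T"
proof (induction a b T rule: walk.induct)
  case (2 a b t T) then show ?case by (cases "t = 0") (auto simp: walk_pos dec_def)
qed simp

lemma count_a_walk: "a \<noteq> b \<Longrightarrow> sorted T \<Longrightarrow> T \<noteq> [] \<Longrightarrow> count_list (walk a b T) a = last T"
proof (induction a b T rule: walk.induct)
  case (2 a b t T)
  show ?case
  proof (cases "t = 0")
    case True then show ?thesis using 2 by (cases T) auto
  next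
    case False
    have "sorted (dec (t # T))" using 2 sorted_dec by blast
    then have "count_list (walk a b (dec (t # T))) a = last (dec (t # T))"
      using 2 False by (simp add: dec_def)
    moreover have "T \<noteq> [] \<Longrightarrow> 0 < last T" using 2(4) False last_in_set by fastforce
    ultimately show ?thesis using False 2 by (cases "T = []") (auto simp: walk_pos dec_def last_map)
  qed
qed simp

lemma walk_set: "set (walk a b T) \<subseteq> {a, b}"
  by (induction a b T rule: walk.induct) (auto simp: walk_pos walk.simps)

lemma length_two: "set xs \<subseteq> {a, b} \<Longrightarrow> a \<noteq> b \<Longrightarrow> length xs = count_list xs a + count_list xs b"
  by (induction xs) auto

lemma length_walk: "a \<noteq> b \<Longrightarrow> sorted T \<Longrightarrow> T \<noteq> [] \<Longrightarrow> length (walk a b T) = length T + last T"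
  using length_two[OF walk_set] count_a_walk count_b_walk by (metis add.commute)

lemma walk_ne: "T \<noteq> [] \<Longrightarrow> walk a b T \<noteq> []"
  by (cases T; cases "hd T = 0") (auto simp: walk_pos)

lemma last_walk: "T \<noteq> [] \<Longrightarrow> last (walk a b T) = b"
proof (induction a b T rule: walk.induct)
  case (2 a b t T)
  show ?case
  proof (cases "t = 0")
    case True then show ?thesis using 2 by (cases T) auto
  next
    case False then show ?thesis using 2 walk_ne[of "dec (t # T)" a b] by (simp add: walk_pos dec_def)
  qed
qed simp


fun pos :: "lstep \<Rightarrow> lstep list \<Rightarrow> nat list" where
  "pos b [] = []"
| "pos b (x # s) = (if x = b then 0 # pos b s else map Suc (pos b s))"

lemma pos_walk: "a \<noteq> b \<Longrightarrow> sorted T \<Longrightarrow> pos b (walk a b T) = T"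
proof (induction a b T rule: walk.induct)
  case (2 a b t T)
  show ?case
  proof (cases "t = 0")
    case True then show ?thesis using 2 by auto
  next
    case False
    have "sorted (dec (t # T))" using 2 sorted_dec by blast
    then have "pos b (walk a b (dec (t # T))) = dec (t # T)" using 2 False by simp
    moreover have "\<forall>x\<in>set T. t \<le> x" using 2(4) by auto
    ultimately show ?thesis using False 2(3) by (auto simp: walk_pos dec_def intro!: map_idI)
  qed
qed simp

lemma length_pos: "length (pos b s) = count_list s b"
  by (induction s) auto

lemma sorted_pos: "sorted (pos b s)"
  by (induction s) (auto simp: sorted_map)

lemma pos_bound: "x \<in> set (pos b s) \<Longrightarrow> x \<le> length s - count_list s b"
proof (induction s arbitrary: x)
  case (Cons y s)
  have c: "count_list s b \<le> length s" by (induction s) auto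
  show ?case
  proof (cases "y = b")
    case True then show ?thesis using Cons c by auto
  next
    case False
    then obtain x' where "x = Suc x'" "x' \<in> set (pos b s)" using Cons(2) by auto
    then show ?thesis using Cons(1)[of x'] c False by auto
  qed
qed simp

lemma last_pos: "s \<noteq> [] \<Longrightarrow> last s = b \<Longrightarrow> last (pos b s) = length s - count_list s b"
proof (induction s)
  case (Cons y s)
  have c: "count_list s b \<le> length s" by (induction s) auto
  show ?case
  proof (cases "s = []")
    case True then show ?thesis using Cons by simp
  next
    case False
    then have "count_list s b > 0" using Cons(3)
      by (metis count_list_0_iff last_in_set last_ConsR neq0_conv)
    then have "pos b s \<noteq> []" using length_pos by (metis length_0_conv less_irrefl)
    then show ?thesis using Cons False c by (auto simp: last_map)
  qed
qed simp

lemma walk_pos_inv: "a \<noteq> b \<Longrightarrow> set s \<subseteq> {a, b} \<Longrightarrow> s \<noteq> [] \<Longrightarrow> last s = b \<Longrightarrow> walk a b (pos b s) = s"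
proof (induction s)
  case (Cons x s)
  show ?case
  proof (cases "x = b")
    case True
    then show ?thesis using Cons by (cases "s = []") auto
  next
    case False
    then have xa: "x = a" using Cons by auto
    have sne: "s \<noteq> []" using Cons False by auto
    then have "count_list s b > 0" using Cons(5)
      by (metis count_list_0_iff last_in_set last_ConsR neq0_conv)
    then have pne: "pos b s \<noteq> []" using length_pos by (metis length_0_conv less_irrefl)
    then obtain p ps where p: "pos b s = p # ps" by (cases "pos b s") auto
    have "walk a b (map Suc (pos b s)) = a # walk a b (dec (map Suc (pos b s)))"
      using p by (simp add: walk_pos)
    also have "dec (map Suc (pos b s)) = pos b s" by (simp add: dec_def comp_def)
    finally show ?thesis using Cons sne xa False by simp
  qed
qed simp

lemma count_take_walk:
  "a \<noteq> b \<Longrightarrow> sorted T \<Longrightarrow> count_list (take i (walk a b T)) b = card {x. x < length T \<and> x + T ! x < i}"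
proof (induction a b T arbitrary: i rule: walk.induct)
  case (1 a b) then show ?case by simp
next
  case (2 a b t T)
  show ?case
  proof (cases i)
    case 0 then show ?thesis by simp
  next
    case (Suc i')
    show ?thesis
    proof (cases "t = 0")
      case True
      have IH: "count_list (take i' (walk a b T)) b = card {x. x < length T \<and> x + T ! x < i'}"
        using 2 True by simp
      have "{x. x < length (t # T) \<and> x + (t # T) ! x < i} = insert 0 (Suc ` {x. x < length T \<and> x + T ! x < i'})"
        (is "?L = ?R")
      proof
        show "?L \<subseteq> ?R"
        proof
          fix x assume "x \<in> ?L"
          then show "x \<in> ?R" using Suc by (cases x) auto
        qed
      next
        show "?R \<subseteq> ?L" using Suc True by auto
      qed
      moreover have "card (insert 0 (Suc ` {x. x < length T \<and> x + T ! x < i'})) = Suc (card {x. x < length T \<and> x + T ! x < i'})"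
        by (subst card_insert_disjoint) (auto simp: card_image)
      ultimately show ?thesis using IH Suc True by simp
    next
      case False
      have sd: "sorted (dec (t # T))" using 2 sorted_dec by blast
      have IH: "count_list (take i' (walk a b (dec (t # T)))) b = card {x. x < length (dec (t # T)) \<and> x + dec (t # T) ! x < i'}"
        using 2(2)[OF False 2(3) sd] by simp
      have ge: "\<forall>x < length (t # T). t \<le> (t # T) ! x"
        using 2(4) by (auto simp: nth_Cons split: nat.splits)
      have eqs: "{x. x < length (dec L) \<and> x + dec L ! x < i'} = {x. x < length L \<and> x + L ! x < i}"
        if "\<forall>x < length L. 0 < L ! x" for L :: "nat list"
      proof (rule Collect_cong)
        fix x
        show "(x < length (dec L) \<and> x + dec L ! x < i') = (x < length L \<and> x + L ! x < i)"
          using that[rule_format, of x] Suc unfolding dec_def by auto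
      qed
      have "{x. x < length (dec (t # T)) \<and> x + dec (t # T) ! x < i'} = {x. x < length (t # T) \<and> x + (t # T) ! x < i}"
        by (rule eqs) (use ge False in fastforce)
      then show ?thesis using IH Suc False 2(3) by (simp add: walk_pos)
    qed
  qed
qed

lemma height_Cons: "height (s # w) = delta s + height w"
  by (simp add: height_def)

lemma height_append: "height (v @ w) = height v + height w"
  by (simp add: height_def)

lemma height_zip: "length xs = length ys \<Longrightarrow>
  height (map xi_step (zip xs ys)) = int (count_list xs N) - int (count_list ys N)"
proof (induction xs ys rule: list_induct2)
  case Nil then show ?case by (simp add: height_def)
next
  case (Cons x xs y ys)
  then show ?case by (cases x; cases y) (auto simp: height_Cons)
qed

lemma last_zip: "length xs = length ys \<Longrightarrow> xs \<noteq> [] \<Longrightarrow> last (zip xs ys) = (last xs, last ys)"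
  by (induction xs ys rule: list_induct2) auto

lemma butlast_zip: "length xs = length ys \<Longrightarrow> butlast (zip xs ys) = zip (butlast xs) (butlast ys)"
  by (induction xs ys rule: list_induct2) auto

fun A2 :: "int \<Rightarrow> mstep list \<Rightarrow> int" where
  "A2 h [] = 0"
| "A2 h (s # w) = 2 * h + delta s + A2 (h + delta s) w"

lemma A2_sum: "(\<Sum>i<length w. (of_int (h + height (take i w)) + of_int (h + height (take (Suc i) w)) :: real)) = of_int (A2 h w)"
proof (induction w arbitrary: h)
  case Nil then show ?case by simp
next
  case (Cons s w)
  have "(\<Sum>i<length (s # w). (of_int (h + height (take i (s # w))) + of_int (h + height (take (Suc i) (s # w))) :: real))
     = (of_int h + of_int (h + delta s)) + (\<Sum>i<length w. (of_int (h + height (take (Suc i) (s # w))) + of_int (h + height (take (Suc (Suc i)) (s # w))) :: real))"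
    by (simp only: length_Cons sum.lessThan_Suc_shift) (simp add: height_def)
  also have "(\<Sum>i<length w. (of_int (h + height (take (Suc i) (s # w))) + of_int (h + height (take (Suc (Suc i)) (s # w))) :: real))
     = (\<Sum>i<length w. (of_int ((h + delta s) + height (take i w)) + of_int ((h + delta s) + height (take (Suc i) w)) :: real))"
    by (simp add: height_Cons algebra_simps)
  also have "\<dots> = of_int (A2 (h + delta s) w)" by (rule Cons)
  finally show ?case by simp
qed

lemma Area_A2: "Area w = of_int (A2 0 w) / 2"
proof -
  have "Area w = (\<Sum>i<length w. (of_int (0 + height (take i w)) + of_int (0 + height (take (Suc i) w)) :: real)) / 2"
    unfolding Area_def by (simp add: sum_divide_distrib)
  then show ?thesis using A2_sum[where w=w and h=0] by simp
qed

lemma A2_snoc: "A2 h (w @ [s]) = A2 h w + 2 * (h + height w) + delta s"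
  by (induction w arbitrary: h) (auto simp: height_def algebra_simps)

lemma sum_dec: "\<forall>x\<in>set xs. 0 < x \<Longrightarrow> int (sum_list (dec xs)) = int (sum_list xs) - int (length xs)"
  unfolding dec_def by (induction xs) auto

lemma length_dec[simp]: "length (dec xs) = length xs" by (simp add: dec_def)

lemma alg_area:
  "sorted T \<Longrightarrow> sorted B \<Longrightarrow> length (walk N E T) = length (walk E N B) \<Longrightarrow>
   h + int (count_list (walk N E T) N) - int (count_list (walk E N B) N) = -1 \<Longrightarrow>
   A2 h (alg T B) = 2 * (int (sum_list T) + int (sum_list B)) - 2 * int (length T) * int (length B)
      + 2 * h * (int (length T) + int (length B)) - h^2 + 1"
proof (induction T B arbitrary: h rule: alg.induct)
  case (1 B)
  then have "B = []" using walk_ne[of B E N] by auto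
  then show ?case using 1 by (simp add: power2_eq_square)
next
  case (2 t T)
  then show ?case using walk_ne[of "t # T" N E] by auto
next
  case (3 t T b B)
  have st: "sorted T" and sb: "sorted B" using 3(5,6) by auto
  have gt: "\<forall>x\<in>set T. t \<le> x" and gb: "\<forall>x\<in>set B. b \<le> x" using 3(5,6) by auto
  show ?case
  proof (cases "0 < t \<and> 0 < b")
    case True
    have sdt: "sorted (dec (t # T))" and sdb: "sorted (dec (b # B))" using sorted_dec 3(5,6) by blast+
    have e1: "walk N E (t # T) = N # walk N E (dec (t # T))" using True by (simp add: walk_pos)
    have e2: "walk E N (b # B) = E # walk E N (dec (b # B))" using True by (simp add: walk_pos)
    have IH: "A2 (h + 1) (alg (dec (t # T)) (dec (b # B))) =
      2 * (int (sum_list (dec (t # T))) + int (sum_list (dec (b # B)))) - 2 * int (length (dec (t # T))) * int (length (dec (b # B)))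
      + 2 * (h + 1) * (int (length (dec (t # T))) + int (length (dec (b # B)))) - (h + 1)^2 + 1"
      using 3(1)[OF True sdt sdb] 3(7,8) e1 e2 by simp
    have s1: "int (sum_list (dec (t # T))) = int (sum_list (t # T)) - int (length (t # T))"
      using True gt by (intro sum_dec) auto
    have s2: "int (sum_list (dec (b # B))) = int (sum_list (b # B)) - int (length (b # B))"
      using True gb by (intro sum_dec) auto
    have "alg (t # T) (b # B) = U # alg (dec (t # T)) (dec (b # B))" using True by simp
    then have "A2 h (alg (t # T) (b # B)) = 2 * h + 1 + A2 (h + 1) (alg (dec (t # T)) (dec (b # B)))" by simp
    then show ?thesis unfolding IH s1 s2 length_dec
      by (simp only: of_nat_add) (simp add: algebra_simps power2_eq_square)
  next
    case F1: False
    show ?thesis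
    proof (cases "t = 0 \<and> 0 < b")
      case True
      have sdb: "sorted (dec (b # B))" using 3(6) sorted_dec by blast
      have e2: "walk E N (b # B) = E # walk E N (dec (b # B))" using True by (simp add: walk_pos)
      have IH: "A2 h (alg T (dec (b # B))) =
        2 * (int (sum_list T) + int (sum_list (dec (b # B)))) - 2 * int (length T) * int (length (dec (b # B)))
        + 2 * h * (int (length T) + int (length (dec (b # B)))) - h^2 + 1"
        using 3(2)[OF F1 True st sdb] 3(7,8) e2 True by simp
      have s2: "int (sum_list (dec (b # B))) = int (sum_list (b # B)) - int (length (b # B))"
        using True gb by (intro sum_dec) auto
      have "alg (t # T) (b # B) = HE # alg T (dec (b # B))" using True by simp
      then have "A2 h (alg (t # T) (b # B)) = 2 * h + A2 h (alg T (dec (b # B)))" by simp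
      then show ?thesis unfolding IH s2 length_dec using True
        by (simp add: algebra_simps power2_eq_square)
    next
      case F2: False
      show ?thesis
      proof (cases "b = 0 \<and> 0 < t")
        case True
        have sdt: "sorted (dec (t # T))" using 3(5) sorted_dec by blast
        have e1: "walk N E (t # T) = N # walk N E (dec (t # T))" using True by (simp add: walk_pos)
        have IH: "A2 h (alg (dec (t # T)) B) =
          2 * (int (sum_list (dec (t # T))) + int (sum_list B)) - 2 * int (length (dec (t # T))) * int (length B)
          + 2 * h * (int (length (dec (t # T))) + int (length B)) - h^2 + 1"
          using 3(3)[OF F1 F2 True sdt sb] 3(7,8) e1 True by simp
        have s1: "int (sum_list (dec (t # T))) = int (sum_list (t # T)) - int (length (t # T))"
          using True gt by (intro sum_dec) auto
        have "alg (t # T) (b # B) = HN # alg (dec (t # T)) B" using True F1 F2 by auto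
        then have "A2 h (alg (t # T) (b # B)) = 2 * h + A2 h (alg (dec (t # T)) B)" by simp
        then show ?thesis unfolding IH s1 length_dec using True
          by (simp add: algebra_simps power2_eq_square)
      next
        case F3: False
        then have tb: "t = 0" "b = 0" using F1 F2 by auto
        have IH: "A2 (h - 1) (alg T B) =
          2 * (int (sum_list T) + int (sum_list B)) - 2 * int (length T) * int (length B)
          + 2 * (h - 1) * (int (length T) + int (length B)) - (h - 1)^2 + 1"
          using 3(4)[OF F1 F2 F3 st sb] 3(7,8) tb by simp
        have "alg (t # T) (b # B) = D # alg T B" using tb by simp
        then have "A2 h (alg (t # T) (b # B)) = 2 * h - 1 + A2 (h - 1) (alg T B)" by simp
        then show ?thesis unfolding IH using tb
          by (simp add: algebra_simps power2_eq_square)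
      qed
    qed
  qed
qed


lemma filter_UHE_zip: "length xs = length ys \<Longrightarrow>
  length (filter (\<lambda>s. s = U \<or> s = HE) (map xi_step (zip xs ys))) = count_list ys E"
proof (induction xs ys rule: list_induct2)
  case (Cons x xs y ys)
  then show ?case by (cases x; cases y) auto
qed simp

definition nofsc :: "nat \<Rightarrow> nat \<Rightarrow> config \<Rightarrow> bool" where
  "nofsc m n c \<longleftrightarrow> (\<forall>I J. I \<subseteq> {..<m} \<longrightarrow> J \<subseteq> {..<n} \<longrightarrow> I \<noteq> {} \<or> J \<noteq> {} \<longrightarrow>
      (\<exists>i\<in>I. card J \<le> fst c ! i) \<or> (\<exists>j\<in>J. card I \<le> snd c ! j))"

definition Pc :: "nat list \<Rightarrow> nat \<Rightarrow> nat" where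
  "Pc L k = card {x. x < length L \<and> x + L ! x < k}"

lemma nofsc_last:
  assumes n1: "1 \<le> n" and st: "stable m n c" and so: "sorted_config c" and nf: "nofsc m n c"
  shows "last (snd c) = m"
proof -
  have len: "length (fst c) = m" "length (snd c) = n" using st by (auto simp: stable_def wf_config_def)
  have lc: "last (snd c) = snd c ! (n - 1)" using len n1 by (subst last_conv_nth) auto
  have "n - 1 < n" using n1 by simp
  then have le: "snd c ! (n - 1) \<le> m" using st unfolding stable_def by (simp add: less_Suc_eq_le)
  show ?thesis
  proof (cases "m = 0")
    case True then show ?thesis using lc le by simp
  next
    case False
    have "(\<exists>i\<in>{..<m}. card {..<n} \<le> fst c ! i) \<or> (\<exists>j\<in>{..<n}. card {..<m} \<le> snd c ! j)"
      using nf False unfolding nofsc_def by blast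
    moreover have "\<not> (\<exists>i\<in>{..<m}. card {..<n} \<le> fst c ! i)" using st by (auto simp: stable_def)
    ultimately obtain j where j: "j < n" "m \<le> snd c ! j" by auto
    have "snd c ! j \<le> snd c ! (n - 1)" using so j len by (auto simp: sorted_config_def intro: sorted_nth_mono)
    then show ?thesis using lc le j by simp
  qed
qed

locale cfg =
  fixes m n :: nat and c :: config
  assumes n1: "1 \<le> n" and st: "stable m n c" and so: "sorted_config c" and lst: "last (snd c) = m"
begin

lemma lens: "length (fst c) = m" "length (snd c) = n"
  using st by (auto simp: stable_def wf_config_def)

lemma sT: "sorted (fst c @ [n - 1])"
proof -
  have "\<forall>x\<in>set (fst c). x \<le> n - 1"
  proof
    fix x assume "x \<in> set (fst c)"
    then obtain i where "i < length (fst c)" "x = fst c ! i" by (auto simp: in_set_conv_nth)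
    then show "x \<le> n - 1" using st by (auto simp: stable_def wf_config_def)
  qed
  then show ?thesis using so by (auto simp: sorted_config_def sorted_append)
qed

lemma sB: "sorted (snd c)" using so by (simp add: sorted_config_def)

lemma Bne: "snd c \<noteq> []" using lens n1 by auto

lemma lenT: "length (walk N E (fst c @ [n - 1])) = m + n"
  using length_walk[OF _ sT] lens n1 by simp

lemma lenB: "length (walk E N (snd c)) = m + n"
  using length_walk[OF _ sB Bne] lens lst by simp

lemma cNT: "count_list (walk N E (fst c @ [n - 1])) N = n - 1"
  using count_a_walk[OF _ sT] by simp

lemma cNB: "count_list (walk E N (snd c)) N = n"
  using count_b_walk[of E N "snd c"] lens by simp

lemma alg_eq: "alg (fst c @ [n - 1]) (snd c) = map xi_step (zip (walk N E (fst c @ [n - 1])) (walk E N (snd c)))"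
  by (rule alg_walk)

lemma alg_wc: "alg (fst c @ [n - 1]) (snd c) = wc m n c @ [D]"
proof -
  let ?a = "walk N E (fst c @ [n - 1])" and ?b = "walk E N (snd c)"
  have ne: "?a \<noteq> []" using lenT n1 by auto
  have "last (zip ?a ?b) = (E, N)"
    using last_zip[of ?a ?b] lenT lenB ne last_walk[of "fst c @ [n - 1]" N E] last_walk[OF Bne, of E N] by simp
  moreover have bne: "?b \<noteq> []" by (rule walk_ne[OF Bne])
  moreover have "zip ?a ?b \<noteq> []" using ne bne by (simp add: zip_eq_Nil_iff)
  ultimately have "last (alg (fst c @ [n - 1]) (snd c)) = D"
    unfolding alg_walk by (simp add: last_map)
  moreover have "alg (fst c @ [n - 1]) (snd c) \<noteq> []" using ne bne by (simp add: alg_walk zip_eq_Nil_iff)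
  ultimately show ?thesis unfolding wc_def by (metis append_butlast_last_id fst_conv)
qed

lemma len_wc: "length (wc m n c) = m + n - 1"
proof -
  have "length (alg (fst c @ [n - 1]) (snd c)) = m + n" using lenT lenB by (simp add: alg_walk)
  then show ?thesis using alg_wc by simp
qed

lemma height_alg: "height (alg (fst c @ [n - 1]) (snd c)) = -1"
  using height_zip[of "walk N E (fst c @ [n - 1])" "walk E N (snd c)"] lenT lenB cNT cNB n1
  by (simp add: alg_walk)

lemma height_wc: "height (wc m n c) = 0"
  using height_alg alg_wc by (simp add: height_append height_def)

lemma Xi_Phi: "Xi (Phi m n c) = wc m n c"
proof -
  let ?a = "walk N E (fst c @ [n - 1])" and ?b = "walk E N (snd c)"
  have "map Suc (fst c) @ [n] = map Suc (fst c @ [n - 1])" using n1 by simp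
  then have u: "upper_path n (fst c) = N # ?a"
    unfolding upper_path_def using path_at0_walk[OF sT, of N E n] n1 by simp
  have l: "lower_path m (snd c) = E # ?b"
    unfolding lower_path_def using path_at0_walk[OF sB Bne, of E N "m + 1"] lst by simp
  have "Xi (Phi m n c) = map xi_step (zip (butlast ?a) (butlast ?b))"
    unfolding Xi_def Phi_def using u l by simp
  also have "\<dots> = butlast (map xi_step (zip ?a ?b))"
    using butlast_zip[of ?a ?b] lenT lenB by (metis map_butlast)
  finally show ?thesis unfolding wc_def alg_walk by simp
qed

lemma level_Area: "of_int (level m n c) = Area (wc m n c)"
proof -
  have "A2 0 (alg (fst c @ [n - 1]) (snd c)) =
     2 * (int (sum_list (fst c @ [n - 1])) + int (sum_list (snd c))) - 2 * int (length (fst c @ [n - 1])) * int (length (snd c))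
      + 2 * 0 * (int (length (fst c @ [n - 1])) + int (length (snd c))) - 0^2 + 1"
    using alg_area[OF sT sB, of 0] lenT lenB cNT cNB n1 by simp
  also have "\<dots> = 2 * level m n c - 1" using lens n1
    by (simp add: level_def algebra_simps of_nat_diff)
  finally have "A2 0 (wc m n c @ [D]) = 2 * level m n c - 1" using alg_wc by simp
  then have "A2 0 (wc m n c) = 2 * level m n c" using A2_snoc[of 0 "wc m n c" D] height_wc by simp
  then show ?thesis using Area_A2[of "wc m n c"] by simp
qed

lemma height_take_wc:
  assumes "i \<le> m + n - 1"
  shows "height (take i (wc m n c)) = int i - int (Pc (fst c @ [n - 1]) i) - int (Pc (snd c) i)"
proof -
  let ?a = "walk N E (fst c @ [n - 1])" and ?b = "walk E N (snd c)"
  have "take i (wc m n c) = take i (alg (fst c @ [n - 1]) (snd c))"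
    using alg_wc len_wc assms by simp
  also have "\<dots> = map xi_step (zip (take i ?a) (take i ?b))"
    by (simp add: alg_walk take_map take_zip)
  finally have h: "height (take i (wc m n c)) = int (count_list (take i ?a) N) - int (count_list (take i ?b) N)"
    using height_zip[of "take i ?a" "take i ?b"] lenT lenB by simp
  have "length (take i ?a) = count_list (take i ?a) N + count_list (take i ?a) E"
    using walk_set[of N E] by (intro length_two) (auto dest: in_set_takeD)
  moreover have "length (take i ?a) = i" using lenT assms by simp
  moreover have "count_list (take i ?a) E = Pc (fst c @ [n - 1]) i"
    unfolding Pc_def by (rule count_take_walk[OF _ sT]) simp
  moreover have "count_list (take i ?b) N = Pc (snd c) i"
    unfolding Pc_def by (rule count_take_walk[OF _ sB]) simp
  ultimately show ?thesis using h by simp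
qed

lemma Motz_iff: "wc m n c \<in> Motz m (n - 1) \<longleftrightarrow>
   (\<forall>i \<le> m + n - 1. Pc (fst c @ [n - 1]) i + Pc (snd c) i \<le> i)"
proof -
  have f: "length (filter (\<lambda>s. s = U \<or> s = HE) (wc m n c)) = m"
  proof -
    let ?a = "walk N E (fst c @ [n - 1])" and ?b = "walk E N (snd c)"
    have "wc m n c = map xi_step (zip (butlast ?a) (butlast ?b))"
      unfolding wc_def alg_walk using butlast_zip[of ?a ?b] lenT lenB by (metis map_butlast fst_conv snd_conv)
    then have "length (filter (\<lambda>s. s = U \<or> s = HE) (wc m n c)) = count_list (butlast ?b) E"
      using filter_UHE_zip[of "butlast ?a" "butlast ?b"] lenT lenB by simp
    moreover have "?b = butlast ?b @ [N]" using last_walk[OF Bne, of E N] walk_ne[OF Bne, of E N]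
      by (metis append_butlast_last_id)
    moreover have "count_list ?b E = m" using count_a_walk[OF _ sB Bne] lst by simp
    ultimately show ?thesis by (metis add.right_neutral count_list_append count_list.simps lstep.distinct(1))
  qed
  have "wc m n c \<in> Motz m (n - 1) \<longleftrightarrow> (\<forall>i \<le> m + n - 1. 0 \<le> height (take i (wc m n c)))"
    unfolding Motz_def is_motzkin_def using f len_wc height_wc n1 by auto
  also have "\<dots> \<longleftrightarrow> (\<forall>i \<le> m + n - 1. Pc (fst c @ [n - 1]) i + Pc (snd c) i \<le> i)"
    using height_take_wc by auto
  finally show ?thesis .
qed


end




context cfg begin

lemma nofsc_iff: "nofsc m n c \<longleftrightarrow> (\<forall>i \<le> m + n - 1. Pc (fst c @ [n - 1]) i + Pc (snd c) i \<le> i)"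
proof
  let ?T = "fst c @ [n - 1]"
  have lT: "length ?T = m + 1" using lens by simp
  have Tx: "x < m \<Longrightarrow> ?T ! x = fst c ! x" for x using lens by (simp add: nth_append)
  have Tm: "?T ! m = n - 1" using lens by (simp add: nth_append)
  have sct: "sorted (fst c)" using so by (simp add: sorted_config_def)
  {
    assume nf: "nofsc m n c"
    show "\<forall>i \<le> m + n - 1. Pc ?T i + Pc (snd c) i \<le> i"
    proof (intro allI impI)
      fix k assume k: "k \<le> m + n - 1"
      show "Pc ?T k + Pc (snd c) k \<le> k"
      proof (rule ccontr)
        assume nk: "\<not> Pc ?T k + Pc (snd c) k \<le> k"
        define I where "I = {x. x < length ?T \<and> x + ?T ! x < k}"
        define J where "J = {j. j < length (snd c) \<and> j + snd c ! j < k}"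
        have cI: "Pc ?T k = card I" and cJ: "Pc (snd c) k = card J" unfolding Pc_def I_def J_def by auto
        have fI: "finite I" unfolding I_def by auto
        have fJ: "finite J" unfolding J_def by auto
        have mI: "m \<notin> I" using Tm k n1 unfolding I_def by auto
        have IS: "I \<subseteq> {..<m}" using mI lT unfolding I_def by (auto simp: less_Suc_eq)
        have JS: "J \<subseteq> {..<n}" using lens unfolding J_def by auto
        have ne: "I \<noteq> {} \<or> J \<noteq> {}" using nk cI cJ by auto
        have "(\<exists>i\<in>I. card J \<le> fst c ! i) \<or> (\<exists>j\<in>J. card I \<le> snd c ! j)"
          using nf IS JS ne unfolding nofsc_def by simp
        then show False
        proof
          assume "\<exists>i\<in>I. card J \<le> fst c ! i"
          then obtain i where i: "i \<in> I" "card J \<le> fst c ! i" by blast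
          have im: "i < m" using i IS by auto
          have "I \<subseteq> {..<k - card J}"
          proof
            fix x assume x: "x \<in> I"
            then have xl: "x < length ?T" "x + ?T ! x < k" unfolding I_def by auto
            have il: "i + ?T ! i < k" using i unfolding I_def by auto
            have "x + card J < k"
            proof (cases "i \<le> x")
              case True
              have "?T ! i \<le> ?T ! x" using sT True xl by (intro sorted_nth_mono) auto
              then show ?thesis using Tx[OF im] i xl by simp
            next
              case False
              then show ?thesis using Tx[OF im] i il by simp
            qed
            then show "x \<in> {..<k - card J}" by simp
          qed
          then have "card I \<le> k - card J" using card_mono[OF finite_lessThan] by fastforce
          moreover have "card I > 0" using i fI by (auto simp: card_gt_0_iff)
          ultimately show False using nk cI cJ by simp
        next
          assume "\<exists>j\<in>J. card I \<le> snd c ! j"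
          then obtain j where j: "j \<in> J" "card I \<le> snd c ! j" by blast
          have "J \<subseteq> {..<k - card I}"
          proof
            fix y assume y: "y \<in> J"
            then have yl: "y < length (snd c)" "y + snd c ! y < k" unfolding J_def by auto
            have jl: "j + snd c ! j < k" using j unfolding J_def by auto
            have "y + card I < k"
            proof (cases "j \<le> y")
              case True
              have "snd c ! j \<le> snd c ! y" using sB True yl by (intro sorted_nth_mono) auto
              then show ?thesis using j yl by simp
            next
              case False
              then show ?thesis using j jl by simp
            qed
            then show "y \<in> {..<k - card I}" by simp
          qed
          then have "card J \<le> k - card I" using card_mono[OF finite_lessThan] by fastforce
          moreover have "card J > 0" using j fJ by (auto simp: card_gt_0_iff)
          ultimately show False using nk cI cJ by simp
        qed
      qed
    qed
  }
  {
    assume mot: "\<forall>i \<le> m + n - 1. Pc ?T i + Pc (snd c) i \<le> i"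
    show "nofsc m n c"
      unfolding nofsc_def
    proof (intro allI impI)
      fix I J :: "nat set"
      assume IS: "I \<subseteq> {..<m}" and JS: "J \<subseteq> {..<n}" and ne: "I \<noteq> {} \<or> J \<noteq> {}"
      show "(\<exists>i\<in>I. card J \<le> fst c ! i) \<or> (\<exists>j\<in>J. card I \<le> snd c ! j)"
      proof (rule ccontr)
        assume "\<not> ?thesis"
        then have hI: "\<forall>i\<in>I. fst c ! i < card J" and hJ: "\<forall>j\<in>J. snd c ! j < card I" by auto
        have fI: "finite I" using IS finite_subset by blast
        have fJ: "finite J" using JS finite_subset by blast
        have Ine: "I \<noteq> {}"
        proof
          assume "I = {}"
          then obtain j where "j \<in> J" using ne by auto
          then show False using hJ \<open>I = {}\<close> by auto
        qed
        have Jne: "J \<noteq> {}"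
        proof
          assume "J = {}"
          then obtain i where "i \<in> I" using ne by auto
          then show False using hI \<open>J = {}\<close> by auto
        qed
        define a where "a = card I"
        define b where "b = card J"
        have a1: "1 \<le> a" using Ine fI unfolding a_def by (simp add: Suc_le_eq card_gt_0_iff)
        have b1: "1 \<le> b" using Jne fJ unfolding b_def by (simp add: Suc_le_eq card_gt_0_iff)
        have am: "a \<le> m" using card_mono[OF _ IS] unfolding a_def by simp
        have bn: "b \<le> n" using card_mono[OF _ JS] unfolding b_def by simp
        define k where "k = a + b - 1"
        have kb: "k \<le> m + n - 1" using am bn a1 b1 unfolding k_def by simp
        obtain i0 where i0: "i0 \<in> I" "a - 1 \<le> i0"
        proof (rule ccontr)
          assume "\<not> thesis"
          then have "I \<subseteq> {..<a - 1}" using that by fastforce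
          then have "a \<le> a - 1" using card_mono[OF finite_lessThan] unfolding a_def by fastforce
          then show False using a1 by simp
        qed
        obtain j0 where j0: "j0 \<in> J" "b - 1 \<le> j0"
        proof (rule ccontr)
          assume "\<not> thesis"
          then have "J \<subseteq> {..<b - 1}" using that by fastforce
          then have "b \<le> b - 1" using card_mono[OF finite_lessThan] unfolding b_def by fastforce
          then show False using b1 by simp
        qed
        have subP: "{..<a} \<subseteq> {x. x < length ?T \<and> x + ?T ! x < k}"
        proof
          fix x assume "x \<in> {..<a}"
          then have x: "x < a" by simp
          have i0m: "i0 < m" using i0 IS by auto
          have "fst c ! x \<le> fst c ! i0" using sct x i0 i0m lens by (intro sorted_nth_mono) auto
          then have "fst c ! x < b" using hI i0 unfolding b_def by fastforce
          then show "x \<in> {x. x < length ?T \<and> x + ?T ! x < k}"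
            using Tx[of x] x am lT unfolding k_def by simp
        qed
        have finP: "finite {x. x < length ?T \<and> x + ?T ! x < k}" by (rule finite_subset[of _ "{..<length ?T}"]) auto
        have Pa: "a \<le> Pc ?T k" unfolding Pc_def using card_mono[OF finP subP] by simp
        have subQ: "{..<b} \<subseteq> {j. j < length (snd c) \<and> j + snd c ! j < k}"
        proof
          fix y assume "y \<in> {..<b}"
          then have y: "y < b" by simp
          have j0n: "j0 < n" using j0 JS by auto
          have "snd c ! y \<le> snd c ! j0" using sB y j0 j0n lens by (intro sorted_nth_mono) auto
          then have "snd c ! y < a" using hJ j0 unfolding a_def by fastforce
          then show "y \<in> {j. j < length (snd c) \<and> j + snd c ! j < k}"
            using y bn lens unfolding k_def by simp
        qed
        have finQ: "finite {j. j < length (snd c) \<and> j + snd c ! j < k}" by (rule finite_subset[of _ "{..<length (snd c)}"]) auto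
        have Qb: "b \<le> Pc (snd c) k" unfolding Pc_def using card_mono[OF finQ subQ] by simp
        have "Pc ?T k + Pc (snd c) k \<le> k" using mot kb by blast
        then show False using Pa Qb a1 b1 unfolding k_def by simp
      qed
    qed
  }
qed

end




lemma top': "i < m \<Longrightarrow> n \<le> ct ! i \<Longrightarrow> d = (ct[i := ct ! i - n], map Suc cb) \<Longrightarrow> topple m n (ct, cb) d"
  using topple.top by blast
lemma bot': "j < n \<Longrightarrow> m + 1 \<le> cb ! j \<Longrightarrow> d = (map Suc ct, cb[j := cb ! j - (m + 1)]) \<Longrightarrow> topple m n (ct, cb) d"
  using topple.bot by blast

lemma topple_wf: "topple m n c d \<Longrightarrow> wf_config m n c \<Longrightarrow> wf_config m n d"
  by (induction rule: topple.induct) (auto simp: wf_config_def Suc_diff_le Suc_diff_Suc)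

lemma topples_wf: "(topple m n)\<^sup>*\<^sup>* c d \<Longrightarrow> wf_config m n c \<Longrightarrow> wf_config m n d"
  by (induction rule: rtranclp_induct) (auto intro: topple_wf)

fun addv :: "nat + nat \<Rightarrow> config \<Rightarrow> config" where
  "addv (Inl i) c = ((fst c)[i := fst c ! i + 1], snd c)"
| "addv (Inr j) c = (fst c, (snd c)[j := snd c ! j + 1])"

fun valid :: "nat \<Rightarrow> nat \<Rightarrow> nat + nat \<Rightarrow> bool" where
  "valid m n (Inl i) = (i < m)"
| "valid m n (Inr j) = (j < n)"

fun adds :: "(nat + nat) list \<Rightarrow> config \<Rightarrow> config" where
  "adds [] c = c"
| "adds (v # vs) c = adds vs (addv v c)"

lemma adds_append: "adds (vs @ ws) c = adds ws (adds vs c)"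
  by (induction vs arbitrary: c) auto

lemma addv_wf: "wf_config m n c \<Longrightarrow> wf_config m n (addv v c)"
  by (cases v) (auto simp: wf_config_def Suc_diff_le Suc_diff_Suc)

lemma adds_wf: "wf_config m n c \<Longrightarrow> wf_config m n (adds vs c)"
  by (induction vs arbitrary: c) (auto simp: addv_wf)

lemma chain_step_iff: "chain_step m n c d \<longleftrightarrow> stable m n c \<and> (\<exists>v. valid m n v \<and> stabilises m n (addv v c) d)"
proof
  assume "chain_step m n c d"
  then show "stable m n c \<and> (\<exists>v. valid m n v \<and> stabilises m n (addv v c) d)"
    unfolding chain_step_def by (metis addv.simps valid.simps)
next
  assume "stable m n c \<and> (\<exists>v. valid m n v \<and> stabilises m n (addv v c) d)"
  then obtain v where "stable m n c" "valid m n v" "stabilises m n (addv v c) d" by blast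
  then show "chain_step m n c d" unfolding chain_step_def by (cases v) auto
qed

lemma topple_addv:
  assumes "topple m n c d" "wf_config m n c" "valid m n v"
  shows "topple m n (addv v c) (addv v d)"
  using assms
proof (induction rule: topple.induct)
  case (top i ct cb)
  show ?case
  proof (cases v)
    case (Inl i')
    show ?thesis
    proof (cases "i = i'")
      case True
      then show ?thesis using top unfolding Inl addv.simps fst_conv snd_conv
        by (intro top') (auto simp: wf_config_def Suc_diff_le Suc_diff_Suc)
    next
      case False
      then show ?thesis using top unfolding Inl addv.simps fst_conv snd_conv
        by (intro top') (auto simp: wf_config_def list_update_swap)
    qed
  next
    case (Inr j)
    then show ?thesis using top unfolding Inr addv.simps fst_conv snd_conv
      by (intro top') (auto simp: wf_config_def map_update Suc_diff_le Suc_diff_Suc)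
  qed
next
  case (bot j cb ct)
  show ?case
  proof (cases v)
    case (Inr j')
    show ?thesis
    proof (cases "j = j'")
      case True
      then show ?thesis using bot unfolding Inr addv.simps fst_conv snd_conv
        by (intro bot') (auto simp: wf_config_def Suc_diff_le Suc_diff_Suc)
    next
      case False
      then show ?thesis using bot unfolding Inr addv.simps fst_conv snd_conv
        by (intro bot') (auto simp: wf_config_def list_update_swap)
    qed
  next
    case (Inl i)
    then show ?thesis using bot unfolding Inl addv.simps fst_conv snd_conv
      by (intro bot') (auto simp: wf_config_def map_update Suc_diff_le Suc_diff_Suc)
  qed
qed

lemma topples_addv:
  "(topple m n)\<^sup>*\<^sup>* c d \<Longrightarrow> wf_config m n c \<Longrightarrow> valid m n v \<Longrightarrow> (topple m n)\<^sup>*\<^sup>* (addv v c) (addv v d)"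
proof (induction rule: rtranclp_induct)
  case (step y z)
  have "wf_config m n y" using step topples_wf by blast
  then show ?case using step topple_addv by (metis rtranclp.rtrancl_into_rtrancl)
qed simp

lemma topples_adds:
  "(topple m n)\<^sup>*\<^sup>* c d \<Longrightarrow> wf_config m n c \<Longrightarrow> \<forall>v\<in>set vs. valid m n v \<Longrightarrow> (topple m n)\<^sup>*\<^sup>* (adds vs c) (adds vs d)"
proof (induction vs arbitrary: c d)
  case (Cons v vs)
  have "(topple m n)\<^sup>*\<^sup>* (addv v c) (addv v d)" using Cons topples_addv by simp
  then show ?case using Cons addv_wf by simp
qed simp

lemma diamond1:
  assumes "topple m n c d1" "topple m n c d2" "wf_config m n c"
  shows "d1 = d2 \<or> (\<exists>e. topple m n d1 e \<and> topple m n d2 e)"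
  using assms
proof (induction rule: topple.induct)
  case (top i ct cb)
  from top(3,1,2,4) show ?case
  proof (induction rule: topple.cases)
    case (top i' ct' cb')
    show ?case
    proof (cases "i = i'")
      case True then show ?thesis using top by simp
    next
      case False
      let ?e = "((ct[i := ct ! i - n])[i' := ct ! i' - n], map Suc (map Suc cb))"
      have "topple m n (ct[i := ct ! i - n], map Suc cb) ?e"
        using top False by (intro top') auto
      moreover have "topple m n (ct[i' := ct ! i' - n], map Suc cb) ?e"
        using top False by (intro top'[where i=i]) (auto simp: list_update_swap)
      ultimately show ?thesis using top by auto
    qed
  next
    case (bot j cb' ct')
    let ?e = "(map Suc (ct[i := ct ! i - n]), (map Suc cb)[j := Suc (cb ! j) - (m + 1)])"
    have "topple m n (ct[i := ct ! i - n], map Suc cb) ?e"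
      using bot by (intro bot') (auto simp: wf_config_def Suc_diff_le Suc_diff_Suc)
    moreover have "topple m n (map Suc ct, cb[j := cb ! j - (m + 1)]) ?e"
      using bot by (intro top') (auto simp: wf_config_def map_update Suc_diff_le Suc_diff_Suc)
    ultimately show ?case using bot by auto
  qed
next
  case (bot j cb ct)
  from bot(3,1,2,4) show ?case
  proof (induction rule: topple.cases)
    case (bot j' cb' ct')
    show ?case
    proof (cases "j = j'")
      case True then show ?thesis using bot by simp
    next
      case False
      let ?e = "(map Suc (map Suc ct), (cb[j := cb ! j - (m + 1)])[j' := cb ! j' - (m + 1)])"
      have "topple m n (map Suc ct, cb[j := cb ! j - (m + 1)]) ?e"
        using bot False by (intro bot') auto
      moreover have "topple m n (map Suc ct, cb[j' := cb ! j' - (m + 1)]) ?e"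
        using bot False by (intro bot'[where j=j]) (auto simp: list_update_swap)
      ultimately show ?thesis using bot by auto
    qed
  next
    case (top i ct' cb')
    let ?e = "(map Suc (ct[i := ct ! i - n]), (map Suc cb)[j := Suc (cb ! j) - (m + 1)])"
    have "topple m n (ct[i := ct ! i - n], map Suc cb) ?e"
      using top by (intro bot') (auto simp: wf_config_def Suc_diff_le Suc_diff_Suc)
    moreover have "topple m n (map Suc ct, cb[j := cb ! j - (m + 1)]) ?e"
      using top by (intro top') (auto simp: wf_config_def map_update Suc_diff_le Suc_diff_Suc)
    ultimately show ?case using top by auto
  qed
qed


lemma strip:
  assumes "(topple m n)\<^sup>*\<^sup>* c d2" "topple m n c d1" "wf_config m n c"
  shows "\<exists>e. (topple m n)\<^sup>*\<^sup>* d1 e \<and> (topple m n)\<^sup>=\<^sup>= d2 e"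
  using assms(1)
proof (induction rule: rtranclp_induct)
  case base then show ?case using assms by blast
next
  case (step y z)
  then obtain e where e: "(topple m n)\<^sup>*\<^sup>* d1 e" "(topple m n)\<^sup>=\<^sup>= y e" by blast
  have wy: "wf_config m n y" using step(1) assms(3) topples_wf by blast
  show ?case
  proof (cases "y = e")
    case True
    have "(topple m n)\<^sup>*\<^sup>* d1 z" using e(1) True step(2) by (simp add: rtranclp.rtrancl_into_rtrancl)
    then show ?thesis by blast
  next
    case False
    then have ye: "topple m n y e" using e by auto
    from diamond1[OF step(2) ye wy] show ?thesis
    proof
      assume "z = e" then show ?thesis using e by blast
    next
      assume "\<exists>e'. topple m n z e' \<and> topple m n e e'"
      then obtain e' where e': "topple m n z e'" "topple m n e e'" by blast
      have "(topple m n)\<^sup>*\<^sup>* d1 e'" using e(1) e'(2) by (simp add: rtranclp.rtrancl_into_rtrancl)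
      then show ?thesis using e' by blast
    qed
  qed
qed

lemma confluent:
  assumes "(topple m n)\<^sup>*\<^sup>* c d1" "(topple m n)\<^sup>*\<^sup>* c d2" "wf_config m n c"
  shows "\<exists>e. (topple m n)\<^sup>*\<^sup>* d1 e \<and> (topple m n)\<^sup>*\<^sup>* d2 e"
  using assms(1)
proof (induction rule: rtranclp_induct)
  case base then show ?case using assms by blast
next
  case (step y z)
  then obtain e where e: "(topple m n)\<^sup>*\<^sup>* y e" "(topple m n)\<^sup>*\<^sup>* d2 e" by blast
  have wy: "wf_config m n y" using step(1) assms(3) topples_wf by blast
  obtain e' where e': "(topple m n)\<^sup>*\<^sup>* z e'" "(topple m n)\<^sup>=\<^sup>= e e'"
    using strip[OF e(1) step(2) wy] by blast
  from e'(2) have "(topple m n)\<^sup>*\<^sup>* e e'" by auto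
  then have "(topple m n)\<^sup>*\<^sup>* d2 e'" using e(2) by simp
  then show ?case using e' by blast
qed

lemma stable_no_topple: "stable m n c \<Longrightarrow> \<not> topple m n c d"
  by (auto simp: stable_def elim!: topple.cases)

lemma stable_topples: "stable m n c \<Longrightarrow> (topple m n)\<^sup>*\<^sup>* c d \<Longrightarrow> d = c"
  by (erule converse_rtranclpE) (auto dest: stable_no_topple)

lemma unique_stab:
  assumes "wf_config m n c" "(topple m n)\<^sup>*\<^sup>* c d1" "(topple m n)\<^sup>*\<^sup>* c d2" "stable m n d1" "stable m n d2"
  shows "d1 = d2"
proof -
  obtain e where e: "(topple m n)\<^sup>*\<^sup>* d1 e" "(topple m n)\<^sup>*\<^sup>* d2 e" using confluent assms by blast
  have "e = d1" using stable_topples[OF assms(4) e(1)] .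
  moreover have "e = d2" using stable_topples[OF assms(5) e(2)] .
  ultimately show ?thesis by simp
qed

lemma sum_list_Suc: "sum_list (map Suc xs) = sum_list xs + length xs"
  by (induction xs) auto

lemma topple_measure:
  assumes "topple m n c d" "wf_config m n c" "1 \<le> n"
  shows "(d, c) \<in> measures [\<lambda>c. sum_list (fst c) + sum_list (snd c), \<lambda>c. sum_list (fst c)]"
  using assms
proof (induction rule: topple.induct)
  case (top i ct cb)
  have il: "i < length ct" "length cb = n" using top by (auto simp: wf_config_def)
  have "ct ! i \<le> sum_list ct" by (rule elem_le_sum_list[OF il(1)])
  moreover have "sum_list (ct[i := ct ! i - n]) = sum_list ct + (ct ! i - n) - ct ! i"
    by (rule sum_list_update[OF il(1)])
  ultimately show ?case using top il by (simp add: sum_list_Suc)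
next
  case (bot j cb ct)
  have jl: "j < length cb" "length ct = m" using bot by (auto simp: wf_config_def)
  have "cb ! j \<le> sum_list cb" by (rule elem_le_sum_list[OF jl(1)])
  moreover have "sum_list (cb[j := cb ! j - (m + 1)]) = sum_list cb + (cb ! j - (m + 1)) - cb ! j"
    by (rule sum_list_update[OF jl(1)])
  ultimately show ?case using bot jl by (simp add: sum_list_Suc)
qed

lemma unstable_topple:
  assumes "wf_config m n c" "\<not> stable m n c"
  shows "\<exists>d. topple m n c d"
proof -
  obtain ct cb where c: "c = (ct, cb)" by (cases c)
  from assms have "(\<exists>i<m. n \<le> ct ! i) \<or> (\<exists>j<n. m + 1 \<le> cb ! j)"
    unfolding stable_def c by auto
  then show ?thesis unfolding c using topple.top topple.bot by blast
qed

lemma stab_exists: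
  assumes "wf_config m n c" "1 \<le> n"
  shows "\<exists>d. (topple m n)\<^sup>*\<^sup>* c d \<and> stable m n d"
  using assms(1)
proof (induction c rule: wf_induct[OF wf_measures[of "[\<lambda>c. sum_list (fst c) + sum_list (snd c), \<lambda>c. sum_list (fst c)]"]])
  case (1 c)
  show ?case
  proof (cases "stable m n c")
    case True then show ?thesis by blast
  next
    case False
    then obtain d where d: "topple m n c d" using unstable_topple 1 by blast
    then have "(d, c) \<in> measures [\<lambda>c. sum_list (fst c) + sum_list (snd c), \<lambda>c. sum_list (fst c)]"
      using topple_measure 1 assms(2) by blast
    moreover have "wf_config m n d" using d 1 topple_wf by blast
    ultimately obtain e where "(topple m n)\<^sup>*\<^sup>* d e" "stable m n e" using 1 by blast
    then show ?thesis using d by (meson converse_rtranclp_into_rtranclp)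
  qed
qed

lemma stable_wf: "stable m n c \<Longrightarrow> wf_config m n c" by (simp add: stable_def)

lemma chain_adds:
  assumes "stable m n x" "\<forall>v\<in>set vs. valid m n v" "(topple m n)\<^sup>*\<^sup>* (adds vs x) y" "stable m n y" "1 \<le> n"
  shows "(chain_step m n)\<^sup>*\<^sup>* x y"
  using assms
proof (induction vs arbitrary: x)
  case Nil
  then show ?case using stable_topples by fastforce
next
  case (Cons v vs)
  have wx: "wf_config m n (addv v x)" using Cons addv_wf stable_wf by blast
  obtain x' where x': "(topple m n)\<^sup>*\<^sup>* (addv v x) x'" "stable m n x'" using stab_exists[OF wx Cons(6)] by blast
  have cs: "chain_step m n x x'" unfolding chain_step_iff stabilises_def using Cons x' by auto
  have t1: "(topple m n)\<^sup>*\<^sup>* (adds vs (addv v x)) (adds vs x')"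
    using topples_adds[OF x'(1) wx] Cons by simp
  obtain y' where y': "(topple m n)\<^sup>*\<^sup>* (adds vs x') y'" "stable m n y'"
    using stab_exists[OF adds_wf[OF stable_wf[OF x'(2)]] Cons(6)] by blast
  have t2: "(topple m n)\<^sup>*\<^sup>* (adds vs (addv v x)) y'" using t1 y'(1) by (rule rtranclp_trans)
  have "y' = y"
    by (rule unique_stab[OF adds_wf[OF wx] t2 _ y'(2) Cons(5)]) (use Cons(4) in simp)
  then have "(chain_step m n)\<^sup>*\<^sup>* x' y" using Cons y' x' by simp
  then show ?case using cs by (meson converse_rtranclp_into_rtranclp)
qed


definition cmax :: "nat \<Rightarrow> nat \<Rightarrow> config" where
  "cmax m n = (replicate m (n - 1), replicate n m)"

lemma cmax_stable: "1 \<le> n \<Longrightarrow> stable m n (cmax m n)"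
  by (auto simp: stable_def wf_config_def cmax_def)

lemma sum_le_bound: "\<forall>x\<in>set xs. x \<le> B \<Longrightarrow> sum_list xs \<le> length xs * B"
  by (induction xs) auto

lemma stable_sum_bounds:
  assumes "stable m n d"
  shows "sum_list (fst d) \<le> m * (n - 1)" "sum_list (snd d) \<le> n * m"
proof -
  have l: "length (fst d) = m" "length (snd d) = n" using assms by (auto simp: stable_def wf_config_def)
  have "\<forall>x\<in>set (fst d). x \<le> n - 1"
  proof
    fix x assume "x \<in> set (fst d)"
    then obtain i where "i < length (fst d)" "x = fst d ! i" by (auto simp: in_set_conv_nth)
    then show "x \<le> n - 1" using assms l by (auto simp: stable_def)
  qed
  then show "sum_list (fst d) \<le> m * (n - 1)" using sum_le_bound[of "fst d" "n - 1"] l by simp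
  have "\<forall>x\<in>set (snd d). x \<le> m"
  proof
    fix x assume "x \<in> set (snd d)"
    then obtain j where "j < length (snd d)" "x = snd d ! j" by (auto simp: in_set_conv_nth)
    then show "x \<le> m" using assms l by (auto simp: stable_def)
  qed
  then show "sum_list (snd d) \<le> n * m" using sum_le_bound[of "snd d" m] l by simp
qed

lemma chain_step_stable: "chain_step m n c d \<Longrightarrow> stable m n d"
  by (auto simp: chain_step_iff stabilises_def)

lemma chain_stable: "(chain_step m n)\<^sup>*\<^sup>* c d \<Longrightarrow> stable m n c \<Longrightarrow> stable m n d"
  by (induction rule: rtranclp_induct) (auto intro: chain_step_stable)

lemma reach_cmax:
  assumes "1 \<le> n" "stable m n d"
  shows "(chain_step m n)\<^sup>*\<^sup>* d (cmax m n)"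
  using assms(2)
proof (induction "m * (n - 1) + n * m - (sum_list (fst d) + sum_list (snd d))" arbitrary: d rule: less_induct)
  case less
  have l: "length (fst d) = m" "length (snd d) = n" using less by (auto simp: stable_def wf_config_def)
  have b: "sum_list (fst d) \<le> m * (n - 1)" "sum_list (snd d) \<le> n * m" using stable_sum_bounds less(2) by auto
  show ?case
  proof (cases "d = cmax m n")
    case True then show ?thesis by simp
  next
    case False
    have "(\<exists>i<m. fst d ! i < n - 1) \<or> (\<exists>j<n. snd d ! j < m)"
    proof (rule ccontr)
      assume nt: "\<not> ?thesis"
      have h1: "\<forall>i<m. fst d ! i = n - 1"
      proof (intro allI impI)
        fix i assume "i < m"
        then have "\<not> fst d ! i < n - 1" "fst d ! i < n" using nt less(2) by (auto simp: stable_def)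
        then show "fst d ! i = n - 1" by linarith
      qed
      have h2: "\<forall>j<n. snd d ! j = m"
      proof (intro allI impI)
        fix j assume "j < n"
        then have "\<not> snd d ! j < m" "snd d ! j < m + 1" using nt less(2) by (auto simp: stable_def)
        then show "snd d ! j = m" by linarith
      qed
      note h = h1 h2
      have "fst d = replicate m (n - 1)" using h l by (intro nth_equalityI) auto
      moreover have "snd d = replicate n m" using h l by (intro nth_equalityI) auto
      ultimately have "d = cmax m n" unfolding cmax_def by (simp add: prod_eq_iff)
      then show False using False by simp
    qed
    then obtain v where v: "valid m n v" and
      vs: "(\<exists>i. v = Inl i \<and> i < m \<and> fst d ! i < n - 1) \<or> (\<exists>j. v = Inr j \<and> j < n \<and> snd d ! j < m)"
    proof -
      from \<open>(\<exists>i<m. fst d ! i < n - 1) \<or> (\<exists>j<n. snd d ! j < m)\<close> show thesis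
      proof
        assume "\<exists>i<m. fst d ! i < n - 1"
        then obtain i where "i < m" "fst d ! i < n - 1" by blast
        then show thesis using that[of "Inl i"] by auto
      next
        assume "\<exists>j<n. snd d ! j < m"
        then obtain j where "j < n" "snd d ! j < m" by blast
        then show thesis using that[of "Inr j"] by auto
      qed
    qed
    define d' where "d' = addv v d"
    have st': "stable m n d'"
      using vs less(2) l unfolding d'_def by (auto simp: stable_def wf_config_def nth_list_update)
    have cs: "chain_step m n d d'"
      unfolding chain_step_iff stabilises_def d'_def using less(2) v st' d'_def by auto
    have "sum_list (fst d') + sum_list (snd d') = Suc (sum_list (fst d) + sum_list (snd d))"
      using vs l unfolding d'_def by (auto simp: sum_list_update)
    moreover have "sum_list (fst d') \<le> m * (n - 1)" "sum_list (snd d') \<le> n * m"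
      using stable_sum_bounds st' by auto
    ultimately have "m * (n - 1) + n * m - (sum_list (fst d') + sum_list (snd d')) <
       m * (n - 1) + n * m - (sum_list (fst d) + sum_list (snd d))" by linarith
    then have "(chain_step m n)\<^sup>*\<^sup>* d' (cmax m n)" using less(1) st' by blast
    with cs show ?thesis by (rule converse_rtranclp_into_rtranclp)
  qed
qed

lemma recurrent_iff:
  assumes "1 \<le> n"
  shows "det_recurrent m n c \<longleftrightarrow> stable m n c \<and> (chain_step m n)\<^sup>*\<^sup>* (cmax m n) c"
proof
  assume "det_recurrent m n c"
  then show "stable m n c \<and> (chain_step m n)\<^sup>*\<^sup>* (cmax m n) c"
    using reach_cmax[OF assms] unfolding det_recurrent_def by blast
next
  assume h: "stable m n c \<and> (chain_step m n)\<^sup>*\<^sup>* (cmax m n) c"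
  show "det_recurrent m n c"
    unfolding det_recurrent_def
  proof (intro conjI allI impI)
    show "stable m n c" using h by simp
    fix d assume "(chain_step m n)\<^sup>*\<^sup>* c d"
    then have "stable m n d" using chain_stable h by blast
    then have "(chain_step m n)\<^sup>*\<^sup>* d (cmax m n)" using reach_cmax[OF assms] by blast
    then show "(chain_step m n)\<^sup>*\<^sup>* d c" by (rule rtranclp_trans) (use h in simp)
  qed
qed

lemma nofsc_mono:
  assumes "nofsc m n c" "\<forall>i<m. fst c ! i \<le> fst c' ! i" "\<forall>j<n. snd c ! j \<le> snd c' ! j"
  shows "nofsc m n c'"
  unfolding nofsc_def
proof (intro allI impI)
  fix I J :: "nat set" assume h: "I \<subseteq> {..<m}" "J \<subseteq> {..<n}" "I \<noteq> {} \<or> J \<noteq> {}"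
  then have "(\<exists>i\<in>I. card J \<le> fst c ! i) \<or> (\<exists>j\<in>J. card I \<le> snd c ! j)"
    using assms(1) unfolding nofsc_def by simp
  then show "(\<exists>i\<in>I. card J \<le> fst c' ! i) \<or> (\<exists>j\<in>J. card I \<le> snd c' ! j)"
  proof
    assume "\<exists>i\<in>I. card J \<le> fst c ! i"
    then obtain i where i: "i \<in> I" "card J \<le> fst c ! i" by blast
    then have "i < m" using h by auto
    then have "card J \<le> fst c' ! i" using i assms(2) le_trans by blast
    then show ?thesis using i by blast
  next
    assume "\<exists>j\<in>J. card I \<le> snd c ! j"
    then obtain j where j: "j \<in> J" "card I \<le> snd c ! j" by blast
    then have "j < n" using h by auto
    then have "card I \<le> snd c' ! j" using j assms(3) le_trans by blast
    then show ?thesis using j by blast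
  qed
qed

lemma nofsc_addv:
  assumes "nofsc m n c" "wf_config m n c" "valid m n v"
  shows "nofsc m n (addv v c)"
proof (rule nofsc_mono[OF assms(1)])
  show "\<forall>i<m. fst c ! i \<le> fst (addv v c) ! i" using assms
    by (cases v) (auto simp: nth_list_update wf_config_def)
  show "\<forall>j<n. snd c ! j \<le> snd (addv v c) ! j" using assms
    by (cases v) (auto simp: nth_list_update wf_config_def)
qed

lemma card_le_Diff1: "finite I \<Longrightarrow> card I \<le> Suc (card (I - {i}))"
  by (cases "i \<in> I") (auto simp: card_Diff_singleton_if)

lemma nofscD: "nofsc m n c \<Longrightarrow> I \<subseteq> {..<m} \<Longrightarrow> J \<subseteq> {..<n} \<Longrightarrow> I \<noteq> {} \<or> J \<noteq> {} \<Longrightarrow>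
  (\<exists>i\<in>I. card J \<le> fst c ! i) \<or> (\<exists>j\<in>J. card I \<le> snd c ! j)"
  unfolding nofsc_def by blast

lemma nofsc_topple:
  assumes "topple m n c d" "wf_config m n c" "nofsc m n c"
  shows "nofsc m n d"
  using assms
proof (induction rule: topple.induct)
  case (top i ct cb)
  show ?case unfolding nofsc_def
  proof (intro allI impI)
    fix I J :: "nat set" assume h: "I \<subseteq> {..<m}" "J \<subseteq> {..<n}" "I \<noteq> {} \<or> J \<noteq> {}"
    have fI: "finite I" using h(1) finite_subset by blast
    show "(\<exists>x\<in>I. card J \<le> fst (ct[i := ct ! i - n], map Suc cb) ! x) \<or>
          (\<exists>y\<in>J. card I \<le> snd (ct[i := ct ! i - n], map Suc cb) ! y)"
    proof (cases "I - {i} = {} \<and> J = {}")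
      case True
      then have "i \<in> I" using h(3) by auto
      then show ?thesis using True by auto
    next
      case False
      have "I - {i} \<subseteq> {..<m}" using h by auto
      moreover have "I - {i} \<noteq> {} \<or> J \<noteq> {}" using False by auto
      ultimately have "(\<exists>i'\<in>I - {i}. card J \<le> ct ! i') \<or> (\<exists>j\<in>J. card (I - {i}) \<le> cb ! j)"
        using nofscD[OF top(4), of "I - {i}" J] h by simp
      then show ?thesis
      proof
        assume "\<exists>i'\<in>I - {i}. card J \<le> ct ! i'"
        then obtain i' where i': "i' \<in> I" "i' \<noteq> i" "card J \<le> ct ! i'" by blast
        then have "ct[i := ct ! i - n] ! i' = ct ! i'" by simp
        then show ?thesis using i' by (intro disjI1 bexI[of _ i']) auto
      next
        assume "\<exists>j\<in>J. card (I - {i}) \<le> cb ! j"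
        then obtain j where j: "j \<in> J" "card (I - {i}) \<le> cb ! j" by blast
        have "j < length cb" using j h top(3) by (auto simp: wf_config_def)
        then show ?thesis using j card_le_Diff1[OF fI, of i] by (intro disjI2 bexI[of _ j]) auto
      qed
    qed
  qed
next
  case (bot j cb ct)
  show ?case unfolding nofsc_def
  proof (intro allI impI)
    fix I J :: "nat set" assume h: "I \<subseteq> {..<m}" "J \<subseteq> {..<n}" "I \<noteq> {} \<or> J \<noteq> {}"
    have fJ: "finite J" using h(2) finite_subset by blast
    show "(\<exists>x\<in>I. card J \<le> fst (map Suc ct, cb[j := cb ! j - (m + 1)]) ! x) \<or>
          (\<exists>y\<in>J. card I \<le> snd (map Suc ct, cb[j := cb ! j - (m + 1)]) ! y)"
    proof (cases "J - {j} = {} \<and> I = {}")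
      case True
      then have "j \<in> J" using h(3) by auto
      then show ?thesis using True by auto
    next
      case False
      have "J - {j} \<subseteq> {..<n}" using h by auto
      moreover have "I \<noteq> {} \<or> J - {j} \<noteq> {}" using False by auto
      ultimately have "(\<exists>i\<in>I. card (J - {j}) \<le> ct ! i) \<or> (\<exists>j'\<in>J - {j}. card I \<le> cb ! j')"
        using nofscD[OF bot(4), of I "J - {j}"] h by simp
      then show ?thesis
      proof
        assume "\<exists>j'\<in>J - {j}. card I \<le> cb ! j'"
        then obtain j' where j': "j' \<in> J" "j' \<noteq> j" "card I \<le> cb ! j'" by blast
        then have "cb[j := cb ! j - (m + 1)] ! j' = cb ! j'" by simp
        then show ?thesis using j' by (intro disjI2 bexI[of _ j']) auto
      next
        assume "\<exists>i\<in>I. card (J - {j}) \<le> ct ! i"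
        then obtain i where i: "i \<in> I" "card (J - {j}) \<le> ct ! i" by blast
        have "i < length ct" using i h bot(3) by (auto simp: wf_config_def)
        then show ?thesis using i card_le_Diff1[OF fJ, of j] by (intro disjI1 bexI[of _ i]) auto
      qed
    qed
  qed
qed

lemma nofsc_topples:
  "(topple m n)\<^sup>*\<^sup>* c d \<Longrightarrow> wf_config m n c \<Longrightarrow> nofsc m n c \<Longrightarrow> nofsc m n d"
proof (induction rule: rtranclp_induct)
  case (step y z)
  then show ?case using topples_wf nofsc_topple by blast
qed simp

lemma nofsc_chain_step:
  assumes "chain_step m n c d" "nofsc m n c"
  shows "nofsc m n d"
proof -
  obtain v where v: "stable m n c" "valid m n v" "(topple m n)\<^sup>*\<^sup>* (addv v c) d"
    using assms(1) unfolding chain_step_iff stabilises_def by blast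
  have w: "wf_config m n c" using v(1) by (rule stable_wf)
  have "nofsc m n (addv v c)" using nofsc_addv[OF assms(2) w v(2)] .
  then show ?thesis using nofsc_topples[OF v(3) addv_wf[OF w]] by blast
qed

lemma nofsc_cmax: "nofsc m n (cmax m n)"
  unfolding nofsc_def cmax_def
proof (intro allI impI)
  fix I J :: "nat set" assume h: "I \<subseteq> {..<m}" "J \<subseteq> {..<n}" "I \<noteq> {} \<or> J \<noteq> {}"
  show "(\<exists>i\<in>I. card J \<le> fst (replicate m (n - 1), replicate n m) ! i) \<or>
        (\<exists>j\<in>J. card I \<le> snd (replicate m (n - 1), replicate n m) ! j)"
  proof (cases "J = {}")
    case True then show ?thesis using h by auto
  next
    case False
    then obtain j where j: "j \<in> J" by auto
    then have "j < n" using h by auto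
    moreover have "card I \<le> m" using card_mono[OF _ h(1)] by simp
    ultimately show ?thesis using j by (intro disjI2 bexI[of _ j]) auto
  qed
qed

lemma nofsc_reach: "(chain_step m n)\<^sup>*\<^sup>* (cmax m n) c \<Longrightarrow> nofsc m n c"
proof (induction rule: rtranclp_induct)
  case base then show ?case by (rule nofsc_cmax)
next
  case (step y z) then show ?case using nofsc_chain_step by blast
qed




definition st :: "nat \<Rightarrow> nat \<Rightarrow> config \<Rightarrow> nat set \<Rightarrow> nat set \<Rightarrow> config" where
  "st m n c I J = (map (\<lambda>i. if i \<in> I then fst c ! i + (n - card J) else fst c ! i - card J) [0..<m],
                   map (\<lambda>j. if j \<in> J then snd c ! j + 1 + (m - card I) else snd c ! j - card I) [0..<n])"

lemma burn_step:
  assumes wf: "wf_config m n c" and nf: "nofsc m n c"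
  shows "I \<subseteq> {..<m} \<Longrightarrow> J \<subseteq> {..<n} \<Longrightarrow> (\<forall>i<m. i \<notin> I \<longrightarrow> card J \<le> fst c ! i) \<Longrightarrow>
         (\<forall>j<n. j \<notin> J \<longrightarrow> card I \<le> snd c ! j) \<Longrightarrow> (topple m n)\<^sup>*\<^sup>* (st m n c I J) (st m n c {} {})"
proof (induction "card I + card J" arbitrary: I J rule: less_induct)
  case less
  have fI: "finite I" using less(2) finite_subset by blast
  have fJ: "finite J" using less(3) finite_subset by blast
  have cI: "card I \<le> m" using card_mono[OF _ less(2)] by simp
  have cJ: "card J \<le> n" using card_mono[OF _ less(3)] by simp
  show ?case
  proof (cases "I = {} \<and> J = {}")
    case True then show ?thesis by simp
  next
    case False
    then have "I \<noteq> {} \<or> J \<noteq> {}" by simp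
    from nofscD[OF nf less(2,3) this] show ?thesis
    proof
      assume "\<exists>i\<in>I. card J \<le> fst c ! i"
      then obtain i where i: "i \<in> I" "card J \<le> fst c ! i" by blast
      have im: "i < m" using i less(2) by auto
      have cI1: "card (I - {i}) = card I - 1" "1 \<le> card I" using i fI by (auto simp: card_gt_0_iff Suc_le_eq)
      have t: "topple m n (st m n c I J) (st m n c (I - {i}) J)"
        unfolding st_def
      proof (rule top')
        show "i < m" by (rule im)
        show "n \<le> map (\<lambda>i. if i \<in> I then fst c ! i + (n - card J) else fst c ! i - card J) [0..<m] ! i"
          using im i by simp
        show "(map (\<lambda>ia. if ia \<in> I - {i} then fst c ! ia + (n - card J) else fst c ! ia - card J) [0..<m],
               map (\<lambda>j. if j \<in> J then snd c ! j + 1 + (m - card (I - {i})) else snd c ! j - card (I - {i})) [0..<n]) =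
              ((map (\<lambda>i. if i \<in> I then fst c ! i + (n - card J) else fst c ! i - card J) [0..<m])
                 [i := map (\<lambda>i. if i \<in> I then fst c ! i + (n - card J) else fst c ! i - card J) [0..<m] ! i - n],
               map Suc (map (\<lambda>j. if j \<in> J then snd c ! j + 1 + (m - card I) else snd c ! j - card I) [0..<n]))"
        by (intro prod_eqI nth_equalityI) (use i im cJ cI1 cI less(4,5) in \<open>auto simp: nth_list_update\<close>)
      qed
      have "(topple m n)\<^sup>*\<^sup>* (st m n c (I - {i}) J) (st m n c {} {})"
      proof (rule less(1))
        show "card (I - {i}) + card J < card I + card J" using cI1 by simp
        show "I - {i} \<subseteq> {..<m}" using less(2) by auto
        show "J \<subseteq> {..<n}" by (rule less(3))
        show "\<forall>ia<m. ia \<notin> I - {i} \<longrightarrow> card J \<le> fst c ! ia" using less(4) i by auto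
        show "\<forall>j<n. j \<notin> J \<longrightarrow> card (I - {i}) \<le> snd c ! j" using less(5) cI1 by auto
      qed
      with t show ?thesis by (rule converse_rtranclp_into_rtranclp)
    next
      assume "\<exists>j\<in>J. card I \<le> snd c ! j"
      then obtain j where j: "j \<in> J" "card I \<le> snd c ! j" by blast
      have jn: "j < n" using j less(3) by auto
      have cJ1: "card (J - {j}) = card J - 1" "1 \<le> card J" using j fJ by (auto simp: card_gt_0_iff Suc_le_eq)
      have t: "topple m n (st m n c I J) (st m n c I (J - {j}))"
        unfolding st_def
      proof (rule bot')
        show "j < n" by (rule jn)
        show "m + 1 \<le> map (\<lambda>j. if j \<in> J then snd c ! j + 1 + (m - card I) else snd c ! j - card I) [0..<n] ! j"
          using jn j by simp
        show "(map (\<lambda>i. if i \<in> I then fst c ! i + (n - card (J - {j})) else fst c ! i - card (J - {j})) [0..<m],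
               map (\<lambda>ja. if ja \<in> J - {j} then snd c ! ja + 1 + (m - card I) else snd c ! ja - card I) [0..<n]) =
              (map Suc (map (\<lambda>i. if i \<in> I then fst c ! i + (n - card J) else fst c ! i - card J) [0..<m]),
               (map (\<lambda>j. if j \<in> J then snd c ! j + 1 + (m - card I) else snd c ! j - card I) [0..<n])
                 [j := map (\<lambda>j. if j \<in> J then snd c ! j + 1 + (m - card I) else snd c ! j - card I) [0..<n] ! j - (m + 1)])"
        by (intro prod_eqI nth_equalityI) (use j jn cJ1 cJ cI less(4,5) in \<open>auto simp: nth_list_update\<close>)
      qed
      have "(topple m n)\<^sup>*\<^sup>* (st m n c I (J - {j})) (st m n c {} {})"
      proof (rule less(1))
        show "card I + card (J - {j}) < card I + card J" using cJ1 by simp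
        show "I \<subseteq> {..<m}" by (rule less(2))
        show "J - {j} \<subseteq> {..<n}" using less(3) by auto
        show "\<forall>i<m. i \<notin> I \<longrightarrow> card (J - {j}) \<le> fst c ! i" using less(4) cJ1 by auto
        show "\<forall>ja<n. ja \<notin> J - {j} \<longrightarrow> card I \<le> snd c ! ja" using less(5) j by auto
      qed
      with t show ?thesis by (rule converse_rtranclp_into_rtranclp)
    qed
  qed
qed

lemma st_empty: "wf_config m n c \<Longrightarrow> st m n c {} {} = c"
  unfolding st_def wf_config_def
  by (cases c) (auto intro!: nth_equalityI)

lemma st_full: "wf_config m n c \<Longrightarrow> st m n c {..<m} {..<n} = (fst c, map Suc (snd c))"
  unfolding st_def wf_config_def
  by (auto intro!: nth_equalityI)

lemma burn:
  assumes "wf_config m n c" "nofsc m n c"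
  shows "(topple m n)\<^sup>*\<^sup>* (fst c, map Suc (snd c)) c"
  using burn_step[OF assms, of "{..<m}" "{..<n}"] st_empty[OF assms(1)] st_full[OF assms(1)] by simp


lemma adds_explicit:
  "wf_config m n c \<Longrightarrow> \<forall>v\<in>set vs. valid m n v \<Longrightarrow>
   adds vs c = (map (\<lambda>i. fst c ! i + count_list vs (Inl i)) [0..<m], map (\<lambda>j. snd c ! j + count_list vs (Inr j)) [0..<n])"
proof (induction vs arbitrary: c)
  case Nil
  then show ?case by (cases c) (auto simp: wf_config_def intro!: nth_equalityI)
next
  case (Cons v vs)
  have w: "wf_config m n (addv v c)" using Cons addv_wf by blast
  have "adds (v # vs) c = adds vs (addv v c)" by simp
  also have "\<dots> = (map (\<lambda>i. fst (addv v c) ! i + count_list vs (Inl i)) [0..<m], map (\<lambda>j. snd (addv v c) ! j + count_list vs (Inr j)) [0..<n])"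
    using Cons w by simp
  also have "\<dots> = (map (\<lambda>i. fst c ! i + count_list (v # vs) (Inl i)) [0..<m], map (\<lambda>j. snd c ! j + count_list (v # vs) (Inr j)) [0..<n])"
    using Cons(2,3) by (cases v) (auto simp: wf_config_def nth_list_update)
  finally show ?case .
qed

lemma count_replicate: "count_list (replicate k x) y = (if x = y then k else 0)"
  by (induction k) auto

lemma count_blocksL:
  "count_list (concat (map (\<lambda>i. replicate (f i) (Inl i)) [0..<k])) (Inl x) = (if x < k then f x else 0)"
  "count_list (concat (map (\<lambda>i. replicate (f i) (Inl i)) [0..<k])) (Inr y) = 0"
  by (induction k) (auto simp: count_replicate)

lemma count_blocksR:
  "count_list (concat (map (\<lambda>j. replicate (g j) (Inr j)) [0..<k])) (Inr y) = (if y < k then g y else 0)"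
  "count_list (concat (map (\<lambda>j. replicate (g j) (Inr j)) [0..<k])) (Inl x) = 0"
  by (induction k) (auto simp: count_replicate)

lemma count_upt: "count_list [0..<k] j = (if j < k then 1 else 0)"
  by (induction k) auto

lemma count_concat_rep: "count_list (concat (replicate k xs)) y = k * count_list xs y"
  by (induction k) auto

lemma count_beta: "count_list (map Inr [0..<n]) (Inr j) = (if j < n then 1 else 0)"
  "count_list (map Inr [0..<n]) (Inl i :: nat + nat) = 0"
   apply (simp add: count_list_map_conv count_upt)
  by (auto simp add: count_list_0_iff)

definition R :: "nat \<Rightarrow> nat \<Rightarrow> config \<Rightarrow> (nat + nat) list \<Rightarrow> bool" where
  "R m n c vs \<longleftrightarrow> (\<forall>v\<in>set vs. valid m n v) \<and> (topple m n)\<^sup>*\<^sup>* (adds vs c) c"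

lemma R_app: "wf_config m n c \<Longrightarrow> R m n c vs \<Longrightarrow> R m n c ws \<Longrightarrow> R m n c (vs @ ws)"
proof -
  assume w: "wf_config m n c" and a: "R m n c vs" and b: "R m n c ws"
  have "(topple m n)\<^sup>*\<^sup>* (adds ws (adds vs c)) (adds ws c)"
    using topples_adds[OF _ adds_wf[OF w]] a b unfolding R_def by blast
  moreover have "(topple m n)\<^sup>*\<^sup>* (adds ws c) c" using b unfolding R_def by simp
  ultimately have "(topple m n)\<^sup>*\<^sup>* (adds ws (adds vs c)) c" by (rule rtranclp_trans)
  then show ?thesis using a b unfolding R_def adds_append by auto
qed

lemma R_concat: "wf_config m n c \<Longrightarrow> \<forall>xs\<in>set xss. R m n c xs \<Longrightarrow> R m n c (concat xss)"
proof (induction xss)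
  case Nil then show ?case by (simp add: R_def)
next
  case (Cons xs xss)
  then show ?case using R_app by simp
qed

lemma R_beta: "wf_config m n c \<Longrightarrow> nofsc m n c \<Longrightarrow> R m n c (map Inr [0..<n])"
proof -
  assume w: "wf_config m n c" and nf: "nofsc m n c"
  have "adds (map Inr [0..<n]) c = (fst c, map Suc (snd c))"
    using adds_explicit[OF w, of "map Inr [0..<n]"] w
    by (auto simp: count_beta wf_config_def intro!: nth_equalityI)
  then show ?thesis unfolding R_def using burn[OF w nf] by auto
qed

lemma adds_repl: "i < length (fst c) \<Longrightarrow> adds (replicate k (Inl i)) c = ((fst c)[i := fst c ! i + k], snd c)"
  by (induction k arbitrary: c) auto

lemma R_repl: "wf_config m n c \<Longrightarrow> nofsc m n c \<Longrightarrow> i < m \<Longrightarrow> R m n c (replicate n (Inl i))"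
proof -
  assume w: "wf_config m n c" and nf: "nofsc m n c" and i: "i < m"
  have il: "i < length (fst c)" using w i by (simp add: wf_config_def)
  have a: "adds (replicate n (Inl i)) c = ((fst c)[i := fst c ! i + n], snd c)" by (rule adds_repl[OF il])
  have "topple m n ((fst c)[i := fst c ! i + n], snd c) (fst c, map Suc (snd c))"
    using i il by (intro top') auto
  then have "(topple m n)\<^sup>*\<^sup>* (adds (replicate n (Inl i)) c) c"
    unfolding a using burn[OF w nf] by (rule converse_rtranclp_into_rtranclp)
  then show ?thesis unfolding R_def using i by auto
qed

lemma reach_from_cmax:
  assumes n1: "1 \<le> n" and stc: "stable m n c" and nf: "nofsc m n c"
  shows "(chain_step m n)\<^sup>*\<^sup>* (cmax m n) c"
proof -
  have w: "wf_config m n c" using stc by (rule stable_wf)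
  define V where "V = concat (map (\<lambda>i. replicate n (Inl i)) [0..<m]) @ concat (replicate m (map Inr [0..<n]))"
  define W where "W = concat (map (\<lambda>i. replicate (Suc (fst c ! i)) (Inl i)) [0..<m]) @ concat (map (\<lambda>j. replicate (snd c ! j) (Inr j)) [0..<n])"
  have RV: "R m n c V" unfolding V_def
  proof (rule R_app[OF w])
    show "R m n c (concat (map (\<lambda>i. replicate n (Inl i)) [0..<m]))"
      by (rule R_concat[OF w]) (auto intro: R_repl[OF w nf])
    show "R m n c (concat (replicate m (map Inr [0..<n])))"
      by (rule R_concat[OF w]) (auto intro: R_beta[OF w nf])
  qed
  have vV: "\<forall>v\<in>set V. valid m n v" using RV unfolding R_def by simp
  have vW: "\<forall>v\<in>set W. valid m n v" unfolding W_def by auto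
  have wc: "wf_config m n (cmax m n)" using cmax_stable[OF n1] by (rule stable_wf)
  have cW: "count_list W (Inl i) = Suc (fst c ! i)" if "i < m" for i
    unfolding W_def using that by (simp del: replicate_Suc add: count_blocksL count_blocksR)
  have cW2: "count_list W (Inr j) = snd c ! j" if "j < n" for j
    unfolding W_def using that by (simp del: replicate_Suc add: count_blocksL count_blocksR)
  have cV: "count_list V (Inl i) = n" if "i < m" for i
    unfolding V_def using that by (simp add: count_blocksL count_concat_rep count_beta)
  have cV2: "count_list V (Inr j) = m" if "j < n" for j
    unfolding V_def using that by (simp add: count_blocksL count_concat_rep count_beta)
  have "adds W (cmax m n) = adds V c"
    unfolding adds_explicit[OF wc vW] adds_explicit[OF w vV] map_eq_conv prod.inject
    using n1 cW cW2 cV cV2 by (simp add: cmax_def)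
  then have "(topple m n)\<^sup>*\<^sup>* (adds W (cmax m n)) c" using RV unfolding R_def by simp
  then show ?thesis using chain_adds[OF cmax_stable[OF n1] vW _ stc n1] by blast
qed

lemma sorted_recurrent_iff:
  assumes "1 \<le> n"
  shows "c \<in> sorted_recurrent m n \<longleftrightarrow> sorted_config c \<and> stable m n c \<and> nofsc m n c"
  unfolding sorted_recurrent_def using recurrent_iff[OF assms] nofsc_reach reach_from_cmax[OF assms] by blast




fun upf :: "mstep \<Rightarrow> lstep" where
  "upf U = N" | "upf HN = N" | "upf HE = E" | "upf D = E"

fun lowf :: "mstep \<Rightarrow> lstep" where
  "lowf U = E" | "lowf HN = N" | "lowf HE = E" | "lowf D = N"

lemma upf_xi: "upf (xi_step p) = fst p"
  by (cases p; cases "fst p"; cases "snd p") auto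

lemma lowf_xi: "lowf (xi_step p) = snd p"
  by (cases p; cases "fst p"; cases "snd p") auto

lemma xi_ul: "map xi_step (zip (map upf w) (map lowf w)) = w"
proof (induction w)
  case (Cons s w) then show ?case by (cases s) auto
qed simp

definition cinv :: "nat \<Rightarrow> mstep list \<Rightarrow> config" where
  "cinv n w = (butlast (pos E (map upf (w @ [D]))), pos N (map lowf (w @ [D])))"

lemma set_lstep: "set (xs :: lstep list) \<subseteq> {N, E}"
  using lstep.exhaust by blast

lemma set_lstep2: "set (xs :: lstep list) \<subseteq> {E, N}"
  using lstep.exhaust by blast

context cfg begin

lemma cinv_wc: "cinv n (wc m n c) = c"
proof -
  let ?a = "walk N E (fst c @ [n - 1])" and ?b = "walk E N (snd c)"
  have eq: "wc m n c @ [D] = map xi_step (zip ?a ?b)" using alg_wc alg_walk by simp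
  have "map upf (wc m n c @ [D]) = ?a" unfolding eq using lenT lenB by (simp add: comp_def upf_xi map_fst_zip)
  then have "pos E (map upf (wc m n c @ [D])) = fst c @ [n - 1]" using pos_walk[OF _ sT] by simp
  moreover have "map lowf (wc m n c @ [D]) = ?b" unfolding eq using lenT lenB by (simp add: comp_def lowf_xi map_snd_zip)
  then have "pos N (map lowf (wc m n c @ [D])) = snd c" using pos_walk[OF _ sB] by simp
  ultimately show ?thesis unfolding cinv_def by simp
qed

end

lemma cnt_len: "length w = count_list w U + count_list w D + count_list w HN + count_list w HE"
proof (induction w)
  case (Cons s w) then show ?case by (cases s) auto
qed simp

lemma cnt_height: "height w = int (count_list w U) - int (count_list w D)"
proof (induction w)
  case (Cons s w) then show ?case by (cases s) (auto simp: height_Cons)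
qed (simp add: height_def)

lemma cnt_filter: "length (filter (\<lambda>s. s = U \<or> s = HE) w) = count_list w U + count_list w HE"
proof (induction w)
  case (Cons s w) then show ?case by (cases s) auto
qed simp

lemma cnt_up: "count_list (map upf w) E = count_list w HE + count_list w D"
  "count_list (map upf w) N = count_list w U + count_list w HN"
proof (induction w)
  case (Cons s w) case 1 then show ?case using Cons by (cases s) auto
next
  case (Cons s w) case 2 then show ?case using Cons by (cases s) auto
qed simp_all

lemma cnt_low: "count_list (map lowf w) N = count_list w HN + count_list w D"
  "count_list (map lowf w) E = count_list w U + count_list w HE"
proof (induction w)
  case (Cons s w) case 1 then show ?case using Cons by (cases s) auto
next
  case (Cons s w) case 2 then show ?case using Cons by (cases s) auto
qed simp_all

lemma surj_part:
  assumes n1: "1 \<le> n" and w: "w \<in> Motz m (n - 1)"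
  shows "cinv n w \<in> sorted_recurrent m n \<and> wc m n (cinv n w) = w"
proof -
  define w' where "w' = w @ [D]"
  define su where "su = map upf w'"
  define sl where "sl = map lowf w'"
  define T where "T = pos E su"
  define B where "B = pos N sl"
  have mz: "length w = m + (n - 1)" "count_list w U + count_list w HE = m" "count_list w U = count_list w D"
    using w cnt_filter[of w] cnt_height[of w] unfolding Motz_def is_motzkin_def by auto
  have cl: "count_list w U + count_list w D + count_list w HN + count_list w HE = m + (n - 1)"
    using mz cnt_len[of w] by simp
  have suE: "count_list su E = m + 1" unfolding su_def w'_def using cnt_up(1)[of w] mz by simp
  have suL: "length su = m + n" unfolding su_def w'_def using mz n1 by simp
  have slN: "count_list sl N = n" unfolding sl_def w'_def using cnt_low(1)[of w] mz cl n1 by simp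
  have slL: "length sl = m + n" unfolding sl_def w'_def using mz n1 by simp
  have sune: "su \<noteq> []" "last su = E" unfolding su_def w'_def by auto
  have slne: "sl \<noteq> []" "last sl = N" unfolding sl_def w'_def by auto
  have lT: "length T = m + 1" unfolding T_def using length_pos suE by simp
  have lastT: "last T = n - 1" unfolding T_def using last_pos[OF sune] suL suE by simp
  have lB: "length B = n" unfolding B_def using length_pos slN by simp
  have lastB: "last B = m" unfolding B_def using last_pos[OF slne] slL slN by simp
  have boundT: "\<forall>x\<in>set T. x \<le> n - 1" unfolding T_def using pos_bound suL suE by fastforce
  have boundB: "\<forall>x\<in>set B. x \<le> m" unfolding B_def using pos_bound slL slN by fastforce
  have Tne: "T \<noteq> []" using lT by auto
  have Tdec: "butlast T @ [n - 1] = T" using Tne lastT by (metis append_butlast_last_id)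
  have c: "cinv n w = (butlast T, B)" unfolding cinv_def T_def B_def su_def sl_def w'_def by simp
  have stab: "stable m n (butlast T, B)"
    unfolding stable_def wf_config_def
  proof (intro conjI allI impI)
    show "length (fst (butlast T, B)) = m" using lT by simp
    show "length (snd (butlast T, B)) = n" using lB by simp
    fix i assume "i < m"
    then have "butlast T ! i = T ! i" "i < length T" using lT by (auto simp: nth_butlast)
    then show "fst (butlast T, B) ! i < n" using boundT n1 nth_mem by fastforce
  next
    fix j assume "j < n"
    then show "snd (butlast T, B) ! j < m + 1" using boundB lB nth_mem by fastforce
  qed
  have so: "sorted_config (butlast T, B)"
    unfolding sorted_config_def T_def B_def by (simp add: sorted_pos sorted_butlast)
  interpret C: cfg m n "(butlast T, B)"
    using n1 stab so lastB unfolding cfg_def by simp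
  have wT: "walk N E T = su" unfolding T_def using walk_pos_inv[OF _ set_lstep sune] by simp
  have wB: "walk E N B = sl" unfolding B_def using walk_pos_inv[OF _ set_lstep2 slne] by simp
  have "wc m n (butlast T, B) = butlast (alg T B)" unfolding wc_def using Tdec by simp
  also have "\<dots> = butlast w'" unfolding alg_walk wT wB su_def sl_def xi_ul by simp
  finally have wcw: "wc m n (butlast T, B) = w" unfolding w'_def by simp
  have "nofsc m n (butlast T, B)" using C.Motz_iff C.nofsc_iff w wcw by simp
  then have "(butlast T, B) \<in> sorted_recurrent m n" using sorted_recurrent_iff[OF n1] stab so by simp
  then show ?thesis using c wcw by simp
qed

theorem theorem4p16:
  fixes m n :: nat
  assumes "1 \<le> n"
  shows "(\<forall>c \<in> sorted_recurrent m n.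
            wc m n c = Xi (Phi m n c) \<and> of_int (level m n c) = Area (wc m n c))
         \<and> bij_betw (wc m n) (sorted_recurrent m n) (Motz m (n - 1))"
proof -
  have cf: "cfg m n c" if "c \<in> sorted_recurrent m n" for c
  proof -
    have h: "sorted_config c" "stable m n c" "nofsc m n c" using that sorted_recurrent_iff[OF assms] by auto
    then have "last (snd c) = m" using nofsc_last[OF assms] by blast
    then show ?thesis using h assms unfolding cfg_def by simp
  qed
  have p1: "\<forall>c \<in> sorted_recurrent m n. wc m n c = Xi (Phi m n c) \<and> of_int (level m n c) = Area (wc m n c)"
    using cf cfg.Xi_Phi cfg.level_Area by metis
  have inj: "inj_on (wc m n) (sorted_recurrent m n)"
  proof (rule inj_onI)
    fix x y assume "x \<in> sorted_recurrent m n" "y \<in> sorted_recurrent m n" "wc m n x = wc m n y"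
    then show "x = y" using cf cfg.cinv_wc by metis
  qed
  have sub: "wc m n ` sorted_recurrent m n \<subseteq> Motz m (n - 1)"
  proof
    fix w assume "w \<in> wc m n ` sorted_recurrent m n"
    then obtain c where c: "c \<in> sorted_recurrent m n" "w = wc m n c" by blast
    have "nofsc m n c" using c sorted_recurrent_iff[OF assms] by auto
    then show "w \<in> Motz m (n - 1)" using c cf cfg.Motz_iff cfg.nofsc_iff by metis
  qed
  have sup: "Motz m (n - 1) \<subseteq> wc m n ` sorted_recurrent m n"
  proof
    fix w assume "w \<in> Motz m (n - 1)"
    then have "cinv n w \<in> sorted_recurrent m n \<and> wc m n (cinv n w) = w" using surj_part[OF assms] by blast
    then show "w \<in> wc m n ` sorted_recurrent m n" by (metis imageI)
  qed
  show ?thesis using p1 inj sub sup unfolding bij_betw_def by blast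
qed


end
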